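(* Let $J\subset\mathbb Z$ be a finite interval, $J'\subseteq J$ a subinterval and $n\ge1$. Let $\tilde\xi_n^{J'\subset J}$ be the unique polynomial of $\mathbb Q_p[x]$ of degree $<((p-1)|J'|+|J|)p^{n-1}$ such that $\tilde\xi_n^{J'\subset J}\equiv \xi_n^{(j)}/p\pmod{\omega_n^{(j)}}$ for $j\in J'$ and $\tilde\xi_n^{J'\subset J}\equiv 1\pmod{\omega_{n-1}^{(j)}}$ for $j\in J\setminus J'$. Then $$\tilde\xi_n^{J'\subset J}=(\ell_n^{J'}\bmod \omega_{n-1}^{J})^{-1}\,\ell_n^{J'},$$ $\tilde\xi_n^{J'\subset J}\equiv 0\pmod{\omega_n^{J'}/\omega_{n-1}^{J'}}$, $\tilde\xi_n^{J'\subset J}\equiv1\pmod{\omega_{n-1}^{J}}$, and $$p^{|J'|}\le\|\tilde\xi_n^{J'\subset J}\|_1\le p^{\,|J'|+\left\lfloor \frac{|J|-1}{p-1}+\max\left(0,\ \frac1{p-1}+\mathrm{ord}_p((|J|-1)!)-\mathrm{ord}_p(u^{p^{n-1}}-1)\right)\right\rfloor}.$$ In particular, for $n>\mathrm{ord}_p((|J|-1)!)-(\mathrm{ord}_p(u-1)-1)$ one has $p^{|J'|}\le\|\tilde\xi_n^{J'\subset J}\|_1\le p^{|J'|+\tilde\beta(|J|)}$, and if moreover $\tilde\beta(|J|)=0$ then $\tilde\xi_n^{J'\subset J}/\ell_n^{J'}$ is a unit of $\mathbb Z_p[[x]]$.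
   Context: Let $p$ be an odd prime and $u\in1+p\mathbb Z_p$ with $u\ne1$. For a polynomial $f\in\mathbb Q_p[x]$, $\|f\|_1$ is the maximum of the $p$-adic absolute values of its coefficients. For $f\in\mathbb Q_p[[x]]$ and $j\in\mathbb Z$ put $f^{(j)}(x)=f(u^{-j}(1+x)-1)$. Let $\omega_n=(1+x)^{p^n}-1$ ($n\ge0$), $\xi_n=\omega_n/\omega_{n-1}$ ($n\ge1$), $\xi_0=px$. For a finite set $S\subset\mathbb Z$ of cardinality $|S|$, $\omega_n^{S}=\prod_{j\in S}\omega_n^{(j)}$ and $\ell_n^{S}=\prod_{j\in S}\xi_n^{(j)}/p$ (empty products equal $1$). For coprime polynomials $P,Q$, $(P\bmod Q)^{-1}$ is the unique polynomial $R$ of degree $<\deg Q$ with $RP\equiv1\pmod Q$. Put $\tilde\beta(s)=\lfloor (s-1)/(p-1)\rfloor$. *)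

theory Defs
  imports "HOL-Computational_Algebra.Computational_Algebra"
begin

definition padic_ord_rat :: "nat \<Rightarrow> rat \<Rightarrow> int" where
  "padic_ord_rat p q = (case quotient_of q of (a, b) \<Rightarrow>
      int (multiplicity (int p) a) - int (multiplicity (int p) b))"

definition padic_abs_rat :: "nat \<Rightarrow> rat \<Rightarrow> real" where
  "padic_abs_rat p q = (if q = 0 then 0 else real p powi (- padic_ord_rat p q))"

text \<open>A field K (of characteristic 0) with an absolute value absv is (isometrically,
  uniquely) a copy of Q_p iff absv is a non-archimedean absolute value restricting to the
  p-adic absolute value on Q, Q is dense in K and K is complete.\<close>

definition is_Qp :: "nat \<Rightarrow> ('a::field_char_0 \<Rightarrow> real) \<Rightarrow> bool" where
  "is_Qp p absv \<longleftrightarrow>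
     (\<forall>x. absv x \<ge> 0) \<and> (\<forall>x. absv x = 0 \<longleftrightarrow> x = 0) \<and>
     (\<forall>x y. absv (x * y) = absv x * absv y) \<and>
     (\<forall>x y. absv (x + y) \<le> max (absv x) (absv y)) \<and>
     (\<forall>q. absv (of_rat q) = padic_abs_rat p q) \<and>
     (\<forall>x e. e > 0 \<longrightarrow> (\<exists>q. absv (x - of_rat q) < e)) \<and>
     (\<forall>X::nat \<Rightarrow> 'a. (\<forall>e>0. \<exists>N. \<forall>m\<ge>N. \<forall>n\<ge>N. absv (X m - X n) < e) \<longrightarrow>
        (\<exists>L. \<forall>e>0. \<exists>N. \<forall>n\<ge>N. absv (X n - L) < e))"

definition ordv :: "nat \<Rightarrow> ('a \<Rightarrow> real) \<Rightarrow> 'a \<Rightarrow> real" where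
  "ordv p absv x = - log (real p) (absv x)"

definition norm1 :: "('a::zero \<Rightarrow> real) \<Rightarrow> 'a poly \<Rightarrow> real" where
  "norm1 absv f = Max (insert 0 (absv ` set (coeffs f)))"

text \<open>f^(j)(x) = f(u^(-j)(1+x) - 1).\<close>
definition twist :: "'a::field \<Rightarrow> int \<Rightarrow> 'a poly \<Rightarrow> 'a poly" where
  "twist u j f = pcompose f [: u powi (- j) - 1, u powi (- j) :]"

definition omega :: "nat \<Rightarrow> nat \<Rightarrow> 'a::field poly" where
  "omega p n = [:1, 1:] ^ (p ^ n) - 1"

definition xi :: "nat \<Rightarrow> nat \<Rightarrow> 'a::field poly" where
  "xi p n = (if n = 0 then [:0, of_nat p:] else omega p n div omega p (n - 1))"

definition omegaS :: "nat \<Rightarrow> 'a::field \<Rightarrow> nat \<Rightarrow> int set \<Rightarrow> 'a poly" where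
  "omegaS p u n S = (\<Prod>j\<in>S. twist u j (omega p n))"

definition ellS :: "nat \<Rightarrow> 'a::field \<Rightarrow> nat \<Rightarrow> int set \<Rightarrow> 'a poly" where
  "ellS p u n S = (\<Prod>j\<in>S. smult (1 / of_nat p) (twist u j (xi p n)))"

definition polyinv :: "'a::field poly \<Rightarrow> 'a poly \<Rightarrow> 'a poly" where
  "polyinv P Q = (THE R. degree R < degree Q \<and> Q dvd (R * P - 1))"

definition xi_cond :: "nat \<Rightarrow> 'a::field \<Rightarrow> nat \<Rightarrow> int set \<Rightarrow> int set \<Rightarrow> 'a poly \<Rightarrow> bool" where
  "xi_cond p u n J' J f \<longleftrightarrow>
     degree f < ((p - 1) * card J' + card J) * p ^ (n - 1) \<and>
     (\<forall>j\<in>J'. twist u j (omega p n) dvd (f - smult (1 / of_nat p) (twist u j (xi p n)))) \<and>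
     (\<forall>j\<in>J - J'. twist u j (omega p (n - 1)) dvd (f - 1))"

definition xitilde :: "nat \<Rightarrow> 'a::field \<Rightarrow> nat \<Rightarrow> int set \<Rightarrow> int set \<Rightarrow> 'a poly" where
  "xitilde p u n J' J = (THE f. xi_cond p u n J' J f)"

definition beta_tilde :: "nat \<Rightarrow> nat \<Rightarrow> int" where
  "beta_tilde p s = \<lfloor>(real s - 1) / (real p - 1)\<rfloor>"

text \<open>Power series with coefficients in Z_p (all coefficients of absolute value at most 1).\<close>
definition integral_fps :: "('a \<Rightarrow> real) \<Rightarrow> 'a fps \<Rightarrow> bool" where
  "integral_fps absv h \<longleftrightarrow> (\<forall>k. absv (fps_nth h k) \<le> 1)"

end

theory Submission
  imports Defs
begin



lemma geom_binom:
  fixes t :: "'b::comm_ring_1"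
  shows "(\<Sum>i<n. (1 + t) ^ i) = (\<Sum>k<n. of_nat (n choose Suc k) * t ^ k)"
proof (induction n)
  case 0
  then show ?case by simp
next
  case (Suc n)
  have b: "(1 + t) ^ n = (\<Sum>k\<le>n. of_nat (n choose k) * t ^ k)"
    using binomial_ring[of t 1 n] by (simp add: add.commute)
  have "(\<Sum>i<Suc n. (1 + t) ^ i) = (\<Sum>k<n. of_nat (n choose Suc k) * t ^ k) + (\<Sum>k\<le>n. of_nat (n choose k) * t ^ k)"
    using Suc b by simp
  also have "(\<Sum>k<n. of_nat (n choose Suc k) * t ^ k) = (\<Sum>k<Suc n. of_nat (n choose Suc k) * t ^ k)"
    by (simp add: binomial_eq_0)
  also have "\<dots> + (\<Sum>k\<le>n. of_nat (n choose k) * t ^ k) = (\<Sum>k<Suc n. of_nat (n choose Suc k) * t ^ k + of_nat (n choose k) * t ^ k)"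
    by (simp add: sum.distrib lessThan_Suc_atMost)
  also have "\<dots> = (\<Sum>k<Suc n. of_nat (Suc n choose Suc k) * t ^ k)"
    by (intro sum.cong) (auto simp: algebra_simps)
  finally show ?case .
qed

lemma pcompose_lin_11: "pcompose [:1, 1:] [:c - 1, c:] = [:c, (c::'b::comm_ring_1):]"
  by (simp add: pcompose_pCons)

lemma pcompose_power_left: "pcompose (f ^ k) q = (pcompose f q) ^ k"
  by (induction k) (simp_all add: pcompose_1 pcompose_mult)

lemma twist_omega:
  "twist u j (omega p m) = [:u powi (-j), u powi (-j):] ^ (p ^ m) - 1"
  by (simp add: twist_def omega_def pcompose_diff pcompose_1 pcompose_power_left pcompose_lin_11)

lemma omega_Y: "omega p m = [:1, 1:] ^ (p ^ m) - (1 :: 'b::field poly)"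
  by (simp add: omega_def)

lemma omega_nonzero: assumes "p \<noteq> 0" shows "omega p m \<noteq> (0 :: 'b::field poly)"
proof
  assume "omega p m = (0 :: 'b poly)"
  then have "[:1, 1:] ^ (p ^ m) = (1 :: 'b poly)" by (simp add: omega_def)
  then have "degree ([:1, 1:] ^ (p ^ m) :: 'b poly) = 0" by simp
  moreover have "degree ([:1, 1:] ^ (p ^ m) :: 'b poly) = p ^ m"
    using degree_linear_power[of "1::'b" "p ^ m"] by simp
  ultimately have "p ^ m = 0" by simp
  then show False using \<open>p \<noteq> 0\<close> by simp
qed

lemma omega_split:
  assumes "n \<ge> 1"
  shows "omega p n = omega p (n - 1) * (\<Sum>i<p. ([:1, 1:] ^ (p ^ (n - 1))) ^ i :: 'b::field poly)"
proof -
  have "p ^ n = p ^ (n - 1) * p" using assms by (cases n) (auto simp: mult.commute)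
  then have "omega p n = ([:1, 1:] ^ (p ^ (n - 1))) ^ p - (1 :: 'b poly)"
    by (simp add: omega_def power_mult)
  also have "\<dots> = omega p (n - 1) * (\<Sum>i<p. ([:1, 1:] ^ (p ^ (n - 1))) ^ i)"
    by (simp add: power_diff_1_eq omega_def)
  finally show ?thesis .
qed

lemma xi_eq:
  assumes "n \<ge> 1" "p \<noteq> 0"
  shows "xi p n = (\<Sum>i<p. ([:1, 1:] ^ (p ^ (n - 1))) ^ i :: 'b::field poly)"
  using assms omega_split[OF assms(1), where 'b='b] omega_nonzero[OF assms(2), of "n - 1", where 'b='b]
  by (simp add: xi_def)

lemma omega_xi:
  assumes "n \<ge> 1" "p \<noteq> 0"
  shows "omega p n = omega p (n - 1) * (xi p n :: 'b::field poly)"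
  using omega_split[OF assms(1), where 'b='b and p=p] xi_eq[OF assms, where 'b='b] by simp




locale qp =
  fixes p :: nat and absv :: "'a::field_char_0 \<Rightarrow> real"
  assumes prime_p: "prime p" and odd_p: "odd p" and Qp: "is_Qp p absv"
begin

lemma av_nonneg [simp]: "absv x \<ge> 0"
  using Qp unfolding is_Qp_def by blast

lemma av_zero_iff [simp]: "absv x = 0 \<longleftrightarrow> x = 0"
  using Qp unfolding is_Qp_def by blast

lemma av_mult: "absv (x * y) = absv x * absv y"
  using Qp unfolding is_Qp_def by blast

lemma av_ultra: "absv (x + y) \<le> max (absv x) (absv y)"
  using Qp unfolding is_Qp_def by blast

lemma av_rat: "absv (of_rat q) = padic_abs_rat p q"
  using Qp unfolding is_Qp_def by blast

lemma av_0 [simp]: "absv 0 = 0" by simp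

lemma av_1 [simp]: "absv 1 = 1"
proof -
  have "absv 1 = absv 1 * absv 1" using av_mult[of 1 1] by simp
  moreover have "absv 1 \<noteq> 0" by simp
  ultimately show ?thesis by (metis mult_cancel_right1)
qed

lemma av_minus1: "absv (-1) = 1"
proof -
  have "absv (-1) * absv (-1) = 1" using av_mult[of "-1" "-1"] by simp
  then show ?thesis using av_nonneg[of "-1"]
    by (metis abs_of_nonneg abs_mult_self_eq abs_one less_eq_real_def mult_1 nle_le power2_eq_square one_power2 power2_eq_iff_nonneg zero_le_one)
qed

lemma av_uminus [simp]: "absv (- x) = absv x"
  using av_mult[of "-1" x] av_minus1 by simp

lemma av_diff_comm: "absv (x - y) = absv (y - x)"
  by (metis av_uminus minus_diff_eq)

lemma av_ultra_diff: "absv (x - y) \<le> max (absv x) (absv y)"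
  using av_ultra[of x "-y"] by simp

lemma av_add_le: "absv x \<le> B \<Longrightarrow> absv y \<le> B \<Longrightarrow> absv (x + y) \<le> B"
  using av_ultra[of x y] by simp

lemma av_diff_le: "absv x \<le> B \<Longrightarrow> absv y \<le> B \<Longrightarrow> absv (x - y) \<le> B"
  using av_ultra_diff[of x y] by simp

lemma av_add_less: "absv x < B \<Longrightarrow> absv y < B \<Longrightarrow> absv (x + y) < B"
  using av_ultra[of x y] by simp

lemma av_power: "absv (x ^ k) = absv x ^ k"
  by (induction k) (simp_all add: av_mult)

lemma av_inverse: "absv (inverse x) = inverse (absv x)"
proof (cases "x = 0")
  case False
  then have "absv (inverse x) * absv x = 1" using av_mult[of "inverse x" x] by simp
  then show ?thesis using False by (simp add: field_simps)
qed simp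

lemma av_divide: "absv (x / y) = absv x / absv y"
  by (simp add: divide_inverse av_mult av_inverse)

lemma av_powi: "absv (x powi k) = absv x powi k"
  by (cases "k \<ge> 0") (simp_all add: power_int_def av_power av_inverse power_inverse)

lemma av_strict: "absv y < absv x \<Longrightarrow> absv (x + y) = absv x"
proof -
  assume a: "absv y < absv x"
  have "absv (x + y) \<le> absv x" using av_ultra[of x y] a by simp
  moreover have "absv x \<le> max (absv (x + y)) (absv y)" using av_ultra_diff[of "x + y" y] by simp
  ultimately show ?thesis using a by linarith
qed

lemma av_sum_le:
  assumes "\<And>i. i \<in> S \<Longrightarrow> absv (f i) \<le> B" "B \<ge> 0"
  shows "absv (sum f S) \<le> B"
  using assms
proof (induction S rule: infinite_finite_induct)
  case (insert x F)
  then show ?case by (simp add: av_add_le)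
qed simp_all

lemma av_sum_less:
  assumes "\<And>i. i \<in> S \<Longrightarrow> absv (f i) < B" "B > 0"
  shows "absv (sum f S) < B"
  using assms
proof (induction S rule: infinite_finite_induct)
  case (insert x F)
  then show ?case by (simp add: av_add_less)
qed simp_all

lemma p_gt2: "p > 2"
proof -
  have "p \<ge> 2" using prime_p by (simp add: prime_ge_2_nat)
  moreover have "p \<noteq> 2" using odd_p by auto
  ultimately show ?thesis by simp
qed

lemma p_pos: "p > 0" using p_gt2 by simp

lemma av_of_nat_le: "absv (of_nat k) \<le> 1"
  by (induction k) (simp_all add: av_add_le)

lemma av_of_int_le: "absv (of_int k) \<le> 1"
  by (cases k rule: int_cases) (simp_all add: av_of_nat_le del: of_nat_Suc)

lemma av_p: "absv (of_nat p) = 1 / real p"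
proof -
  have q: "quotient_of (of_nat p :: rat) = (int p, 1)"
    using quotient_of_int[of "int p"] by simp
  have m1: "multiplicity (int p) (int p) = 1"
    using prime_p by (intro multiplicity_self) (auto simp: prime_gt_0_nat)
  have "padic_ord_rat p (of_nat p) = 1"
    unfolding padic_ord_rat_def q using m1 by simp
  moreover have "(of_nat p :: rat) \<noteq> 0" using p_pos by simp
  ultimately have "padic_abs_rat p (of_nat p) = real p powi (-1)"
    unfolding padic_abs_rat_def by simp
  then show ?thesis using av_rat[of "of_nat p"] by (simp add: power_int_minus inverse_eq_divide)
qed

lemma av_p_inv: "absv (1 / of_nat p) = real p"
  using av_p p_pos by (simp add: av_divide)

lemma av_of_nat_coprime:
  assumes "\<not> p dvd k"
  shows "absv (of_nat k) = 1"
proof -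
  have "coprime p k" using assms prime_p by (simp add: prime_imp_coprime)
  then have "coprime (int p) (int k)" by simp
  then obtain a b where ab: "a * int p + b * int k = 1"
    by (metis bezout_coefficients_fst_snd coprime_iff_gcd_eq_1)
  have "(1::'a) = of_int a * of_nat p + of_int b * of_nat k"
    using arg_cong[OF ab, of "of_int :: int \<Rightarrow> 'a"] by simp
  then have "1 \<le> max (absv (of_int a * of_nat p)) (absv (of_int b * of_nat k))"
    using av_ultra by (metis av_1)
  moreover have "absv (of_int a * of_nat p :: 'a) \<le> 1 / real p"
    using av_of_int_le[of a] av_p p_pos by (simp add: av_mult divide_right_mono)
  moreover have "1 / real p < 1" using p_gt2 by simp
  moreover have "absv (of_int b * of_nat k :: 'a) \<le> absv (of_nat k :: 'a)"
    using av_of_int_le[of b] by (simp add: av_mult mult_left_le_one_le)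
  ultimately show ?thesis using av_of_nat_le[of k] by linarith
qed

lemma av_choose:
  assumes "0 < k" "k < p"
  shows "absv (of_nat (p choose k) :: 'a) \<le> 1 / real p"
proof -
  have "p dvd p choose k" using assms prime_p by (intro dvd_choose_prime) auto
  then obtain m where "p choose k = p * m" by blast
  then show ?thesis using av_of_nat_le[of m] av_p
    using p_pos by (simp add: av_mult divide_right_mono)
qed

end



context qp begin

definition cb :: "real \<Rightarrow> 'a poly \<Rightarrow> bool" where
  "cb B f \<longleftrightarrow> (\<forall>i. absv (coeff f i) \<le> B)"

lemma cb_nonneg: "cb B f \<Longrightarrow> B \<ge> 0"
  unfolding cb_def using av_nonneg order_trans by blast

lemma cb_0: "B \<ge> 0 \<Longrightarrow> cb B 0"
  by (simp add: cb_def)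

lemma cb_const: assumes "absv c \<le> B" shows "cb B [:c:]"
proof -
  have "B \<ge> 0" using assms av_nonneg[of c] by linarith
  then show ?thesis unfolding cb_def using assms by (auto simp: coeff_pCons split: nat.splits)
qed

lemma cb_1: "cb 1 1"
  unfolding cb_def by (auto simp: coeff_1)

lemma cb_mono: "cb B f \<Longrightarrow> B \<le> B' \<Longrightarrow> cb B' f"
  unfolding cb_def by (meson order_trans)

lemma cb_add: "cb B f \<Longrightarrow> cb B g \<Longrightarrow> cb B (f + g)"
  unfolding cb_def by (simp add: av_add_le)

lemma cb_diff: "cb B f \<Longrightarrow> cb B g \<Longrightarrow> cb B (f - g)"
  unfolding cb_def by (simp add: av_diff_le)

lemma cb_uminus: "cb B f \<Longrightarrow> cb B (- f)"
  unfolding cb_def by simp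

lemma cb_smult: "cb B f \<Longrightarrow> cb (absv c * B) (smult c f)"
  unfolding cb_def by (simp add: av_mult mult_left_mono)

lemma cb_mult:
  assumes "cb B1 f" "cb B2 g"
  shows "cb (B1 * B2) (f * g)"
  unfolding cb_def
proof
  fix n
  have "B1 \<ge> 0" "B2 \<ge> 0" using assms cb_nonneg by auto
  show "absv (coeff (f * g) n) \<le> B1 * B2"
    unfolding coeff_mult
    by (rule av_sum_le) (use assms \<open>B1 \<ge> 0\<close> \<open>B2 \<ge> 0\<close> in \<open>auto simp: cb_def av_mult intro!: mult_mono\<close>)
qed

lemma cb_sum:
  assumes "\<And>i. i \<in> S \<Longrightarrow> cb B (f i)" "B \<ge> 0"
  shows "cb B (sum f S)"
  unfolding cb_def coeff_sum
  using assms by (intro allI av_sum_le) (auto simp: cb_def)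

lemma cb_prod:
  assumes "\<And>i. i \<in> S \<Longrightarrow> cb (B i) (f i)"
  shows "cb (prod B S) (prod f S)"
  using assms
proof (induction S rule: infinite_finite_induct)
  case (insert x F)
  then show ?case by (simp add: cb_mult)
qed (simp_all add: cb_1)

lemma cb_power: "cb B f \<Longrightarrow> cb (B ^ k) (f ^ k)"
  by (induction k) (simp_all add: cb_1 cb_mult)

lemma cb_pcompose:
  assumes "cb 1 q" "cb B f"
  shows "cb B (pcompose f q)"
  using assms(2)
proof (induction f rule: pCons_induct)
  case 0
  then show ?case using cb_nonneg by (simp add: cb_0)
next
  case (pCons a f)
  have "cb B f" using pCons.prems unfolding cb_def
    by (metis coeff_pCons_Suc)
  then have ih: "cb B (pcompose f q)" using pCons.IH by simp
  have "absv a \<le> B" using pCons.prems unfolding cb_def by (metis coeff_pCons_0)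
  then show ?case unfolding pcompose_pCons
    using cb_add cb_const cb_mult[OF assms(1) ih] by simp
qed

lemma norm1_alt: "norm1 absv f = Max (absv ` range (coeff f))"
proof -
  have "insert 0 (absv ` set (coeffs f)) = absv ` range (coeff f)"
    unfolding range_coeff by simp
  then show ?thesis unfolding norm1_def by simp
qed

lemma finite_range_coeff: "finite (range (coeff f))"
  unfolding range_coeff by simp

lemma coeff_le_norm1: "absv (coeff f i) \<le> norm1 absv f"
  unfolding norm1_alt using finite_range_coeff by (intro Max_ge) auto

lemma norm1_nonneg: "norm1 absv f \<ge> 0"
  using coeff_le_norm1[of f 0] av_nonneg order_trans by blast

lemma cb_norm1: "cb (norm1 absv f) f"
  unfolding cb_def using coeff_le_norm1 by blast

lemma norm1_le: "cb B f \<Longrightarrow> norm1 absv f \<le> B"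
  unfolding norm1_alt cb_def using finite_range_coeff by (subst Max_le_iff) auto

lemma norm1_attained: "\<exists>i. absv (coeff f i) = norm1 absv f"
proof -
  have "Max (absv ` range (coeff f)) \<in> absv ` range (coeff f)"
    using finite_range_coeff by (intro Max_in) auto
  then show ?thesis unfolding norm1_alt by auto
qed

lemma norm1_ge: "B \<le> absv (coeff f i) \<Longrightarrow> B \<le> norm1 absv f"
  using coeff_le_norm1 order_trans by blast

lemma norm1_smult: "norm1 absv (smult c f) = absv c * norm1 absv f"
proof (rule antisym)
  show "norm1 absv (smult c f) \<le> absv c * norm1 absv f"
    by (rule norm1_le) (rule cb_smult[OF cb_norm1])
  obtain i where "absv (coeff f i) = norm1 absv f" using norm1_attained by blast
  then show "absv c * norm1 absv f \<le> norm1 absv (smult c f)"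
    by (intro norm1_ge[of _ _ i]) (simp add: av_mult)
qed

lemma norm1_0_iff: "norm1 absv f = 0 \<longleftrightarrow> f = 0"
proof
  assume "norm1 absv f = 0"
  then have "\<And>i. coeff f i = 0" using coeff_le_norm1 av_nonneg
    by (metis av_zero_iff order_antisym_conv)
  then show "f = 0" by (simp add: poly_eq_iff)
next
  assume "f = 0"
  then show "norm1 absv f = 0" using norm1_le[OF cb_0[of 0]] norm1_nonneg[of 0] by simp
qed

lemma norm1_mult: "norm1 absv (f * g) = norm1 absv f * norm1 absv g"
proof (cases "f = 0 \<or> g = 0")
  case True
  then show ?thesis using norm1_0_iff by auto
next
  case False
  define A where "A = norm1 absv f"
  define B where "B = norm1 absv g"
  have "A \<noteq> 0" "B \<noteq> 0" using False norm1_0_iff unfolding A_def B_def by auto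
  then have A0: "A > 0" and B0: "B > 0"
    using norm1_nonneg[of f] norm1_nonneg[of g] unfolding A_def B_def by linarith+
  define i0 where "i0 = (LEAST i. absv (coeff f i) = A)"
  define j0 where "j0 = (LEAST j. absv (coeff g j) = B)"
  have fi0: "absv (coeff f i0) = A" unfolding i0_def A_def
    using norm1_attained[of f] by (rule LeastI_ex)
  have gj0: "absv (coeff g j0) = B" unfolding j0_def B_def
    using norm1_attained[of g] by (rule LeastI_ex)
  have fl: "absv (coeff f i) < A" if "i < i0" for i
    using not_less_Least[OF that[unfolded i0_def]] coeff_le_norm1[of f i] unfolding A_def by auto
  have gl: "absv (coeff g j) < B" if "j < j0" for j
    using not_less_Least[OF that[unfolded j0_def]] coeff_le_norm1[of g j] unfolding B_def by auto
  have fA: "absv (coeff f i) \<le> A" for i unfolding A_def by (rule coeff_le_norm1)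
  have gB: "absv (coeff g j) \<le> B" for j unfolding B_def by (rule coeff_le_norm1)
  define n where "n = i0 + j0"
  have split: "coeff (f * g) n = coeff f i0 * coeff g j0 + (\<Sum>i\<in>{..n} - {i0}. coeff f i * coeff g (n - i))"
    unfolding coeff_mult n_def by (subst sum.remove[of _ i0]) auto
  have rest: "absv (\<Sum>i\<in>{..n} - {i0}. coeff f i * coeff g (n - i)) < A * B"
  proof (rule av_sum_less)
    fix i assume "i \<in> {..n} - {i0}"
    then consider "i < i0" | "i > i0 \<and> i \<le> n" by force
    then show "absv (coeff f i * coeff g (n - i)) < A * B"
    proof cases
      case 1
      have "absv (coeff f i) * absv (coeff g (n - i)) \<le> absv (coeff f i) * B"
        by (rule mult_left_mono) (use gB in auto)
      also have "\<dots> < A * B" by (rule mult_strict_right_mono) (use fl[OF 1] B0 in auto)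
      finally show ?thesis by (simp add: av_mult)
    next
      case 2
      then have "n - i < j0" unfolding n_def by linarith
      have "absv (coeff f i) * absv (coeff g (n - i)) \<le> A * absv (coeff g (n - i))"
        by (rule mult_right_mono) (use fA in auto)
      also have "\<dots> < A * B" by (rule mult_strict_left_mono) (use gl[OF \<open>n - i < j0\<close>] A0 in auto)
      finally show ?thesis by (simp add: av_mult)
    qed
  qed (use A0 B0 in simp)
  have "absv (coeff (f * g) n) = A * B"
    unfolding split by (subst av_strict) (use rest fi0 gj0 in \<open>simp_all add: av_mult\<close>)
  then have "A * B \<le> norm1 absv (f * g)" using norm1_ge[of "A * B" "f * g" n] by simp
  moreover have "norm1 absv (f * g) \<le> A * B"
    unfolding A_def B_def by (rule norm1_le, rule cb_mult) (rule cb_norm1)+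
  ultimately show ?thesis unfolding A_def B_def by simp
qed

lemma norm1_prod: "norm1 absv (prod f S) = (\<Prod>i\<in>S. norm1 absv (f i))"
proof (induction S rule: infinite_finite_induct)
  case (infinite A)
  then show ?case using norm1_le[OF cb_1] coeff_le_norm1[of 1 0] by simp
next
  case empty
  then show ?case using norm1_le[OF cb_1] coeff_le_norm1[of 1 0] by simp
next
  case (insert x F)
  then show ?case by (simp add: norm1_mult)
qed

lemma poly_le_norm1:
  assumes "absv x \<le> 1"
  shows "absv (poly f x) \<le> norm1 absv f"
proof -
  have "poly f x = (\<Sum>i\<le>degree f. coeff f i * x ^ i)" by (rule poly_altdef)
  also have "absv \<dots> \<le> norm1 absv f"
  proof (rule av_sum_le)
    fix i assume "i \<in> {..degree f}"
    have "absv (coeff f i) * absv x ^ i \<le> norm1 absv f * 1"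
      by (rule mult_mono) (use assms coeff_le_norm1 norm1_nonneg in \<open>auto simp: power_le_one\<close>)
    then show "absv (coeff f i * x ^ i) \<le> norm1 absv f" by (simp add: av_mult av_power)
  qed (rule norm1_nonneg)
  finally show ?thesis .
qed

end



context qp begin

lemma rp_gt1: "real p > 1" using p_gt2 by simp

lemma rp_powi_add: "real p powi (a + b) = real p powi a * real p powi b"
  using p_pos by (simp add: power_int_add)

lemma rp_powi_mono: "a \<le> b \<Longrightarrow> real p powi a \<le> real p powi b"
  using rp_gt1 by (intro power_int_increasing) auto

lemma rp_powi_pos: "real p powi a > 0"
  using p_pos by simp

definition fb :: "(nat \<Rightarrow> int) \<Rightarrow> 'a fps \<Rightarrow> bool" where
  "fb e F \<longleftrightarrow> (\<forall>i. absv (F $ i) \<le> real p powi e i)"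

definition pb :: "(nat \<Rightarrow> int) \<Rightarrow> 'a poly \<Rightarrow> bool" where
  "pb e f \<longleftrightarrow> (\<forall>i. absv (coeff f i) \<le> real p powi e i)"

lemma pb_fb: "pb e f \<longleftrightarrow> fb e (fps_of_poly f)"
  unfolding pb_def fb_def by simp

lemma fb_mult:
  assumes "fb e1 F" "fb e2 G" "\<And>i j. e1 i + e2 j \<le> e3 (i + j)"
  shows "fb e3 (F * G)"
  unfolding fb_def
proof
  fix n
  show "absv ((F * G) $ n) \<le> real p powi e3 n"
    unfolding fps_mult_nth
  proof (rule av_sum_le)
    fix i assume i: "i \<in> {0..n}"
    have "absv (F $ i * G $ (n - i)) \<le> real p powi e1 i * real p powi e2 (n - i)"
      unfolding av_mult using assms(1,2) unfolding fb_def
      by (intro mult_mono) auto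
    also have "\<dots> = real p powi (e1 i + e2 (n - i))" by (simp add: rp_powi_add)
    also have "\<dots> \<le> real p powi e3 n"
      using assms(3)[of i "n - i"] i by (intro rp_powi_mono) auto
    finally show "absv (F $ i * G $ (n - i)) \<le> real p powi e3 n" .
  qed (simp add: less_imp_le[OF rp_powi_pos])
qed

lemma pb_mult:
  assumes "pb e1 f" "pb e2 g" "\<And>i j. e1 i + e2 j \<le> e3 (i + j)"
  shows "pb e3 (f * g)"
  using assms fb_mult unfolding pb_fb fps_of_poly_mult by blast

lemma pb_1: "e 0 \<ge> 0 \<Longrightarrow> pb e 1"
  unfolding pb_def using rp_powi_mono[of 0 "e 0"] by (auto simp: coeff_1 less_imp_le[OF rp_powi_pos])

lemma pb_prod:
  assumes "\<And>k. k \<in> S \<Longrightarrow> pb e (f k)" "\<And>i j. e i + e j \<le> e (i + j)" "e 0 \<ge> 0"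
  shows "pb e (prod f S)"
  using assms(1)
proof (induction S rule: infinite_finite_induct)
  case (insert x F)
  then show ?case using pb_mult[of e "f x" e "prod f F" e] assms(2) by simp
qed (use pb_1 assms(3) in auto)

lemma fb_inverse:
  assumes "fb e F" "absv (F $ 0) = 1" "e 0 \<ge> 0" "\<And>i j. e i + e j \<le> e (i + j)"
  shows "fb e (inverse F)"
proof -
  define H where "H = inverse F"
  have F0: "F $ 0 \<noteq> 0" using assms(2) by auto
  have FH: "F * H = 1" unfolding H_def using F0 by (rule inverse_mult_eq_1')
  have "absv (H $ m) \<le> real p powi e m" for m
  proof (induction m rule: less_induct)
    case (less m)
    show ?case
    proof (cases "m = 0")
      case True
      have "F $ 0 * H $ 0 = 1" using arg_cong[OF FH, of "\<lambda>X. X $ 0"] by simp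
      then have "absv (H $ 0) = 1" using av_mult[of "F $ 0" "H $ 0"] assms(2) by simp
      then show ?thesis using True rp_powi_mono[OF assms(3)] by simp
    next
      case False
      have "0 = (F * H) $ m" using FH False by simp
      also have "\<dots> = F $ 0 * H $ m + (\<Sum>i = Suc 0..m. F $ i * H $ (m - i))"
        unfolding fps_mult_nth by (subst sum.atLeast_Suc_atMost) auto
      finally have eq: "F $ 0 * H $ m = - (\<Sum>i = Suc 0..m. F $ i * H $ (m - i))"
        by (simp add: eq_neg_iff_add_eq_0)
      have "absv (H $ m) = absv (F $ 0 * H $ m)" using assms(2) by (simp add: av_mult)
      also have "\<dots> = absv (\<Sum>i = Suc 0..m. F $ i * H $ (m - i))" unfolding eq by simp
      also have "\<dots> \<le> real p powi e m"
      proof (rule av_sum_le)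
        fix i assume i: "i \<in> {Suc 0..m}"
        have "absv (F $ i * H $ (m - i)) \<le> real p powi e i * real p powi e (m - i)"
          unfolding av_mult using assms(1) less.IH[of "m - i"] i unfolding fb_def
          by (intro mult_mono) auto
        also have "\<dots> = real p powi (e i + e (m - i))" by (simp add: rp_powi_add)
        also have "\<dots> \<le> real p powi e m"
          using assms(4)[of i "m - i"] i by (intro rp_powi_mono) auto
        finally show "absv (F $ i * H $ (m - i)) \<le> real p powi e m" .
      qed (simp add: less_imp_le[OF rp_powi_pos])
      finally show ?thesis .
    qed
  qed
  then show ?thesis unfolding fb_def H_def by blast
qed

end



definition gpoly :: "nat \<Rightarrow> 'a::field \<Rightarrow> 'a poly" where
  "gpoly p w = smult (1 / of_nat p) (\<Sum>i<p. [:w, w:] ^ i)"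

context qp begin

definition small :: "'a \<Rightarrow> bool" where
  "small w \<longleftrightarrow> absv (w - 1) \<le> 1 / real p"

lemma small_abs: "small w \<Longrightarrow> absv w = 1"
proof -
  assume "small w"
  moreover have "1 / real p < 1" using p_gt2 by simp
  ultimately have "absv (w - 1) < absv 1" by (simp add: small_def)
  then have "absv (1 + (w - 1)) = 1" using av_strict by fastforce
  then show ?thesis by simp
qed

lemma small_1: "small 1" by (simp add: small_def)

lemma small_mult: "small a \<Longrightarrow> small b \<Longrightarrow> small (a * b)"
proof -
  assume a: "small a" and b: "small b"
  have eq: "a * b - 1 = a * (b - 1) + (a - 1)" by (simp add: algebra_simps)
  have "absv (a * (b - 1)) \<le> 1 / real p" using b small_abs[OF a] by (simp add: av_mult small_def)
  then have "absv (a * (b - 1) + (a - 1)) \<le> 1 / real p" using a unfolding small_def by (rule av_add_le)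
  then show ?thesis unfolding small_def eq .
qed

lemma small_inverse: "small a \<Longrightarrow> small (inverse a)"
proof -
  assume a: "small a"
  have a0: "a \<noteq> 0" using small_abs[OF a] by auto
  have "inverse a - 1 = - (a - 1) * inverse a" using a0 by (simp add: field_simps)
  then show ?thesis using a small_abs[OF a] av_diff_comm[of a 1] unfolding small_def by (simp add: av_mult av_inverse)
qed

lemma small_power: "small a \<Longrightarrow> small (a ^ k)"
  by (induction k) (simp_all add: small_1 small_mult)

lemma small_powi: "small a \<Longrightarrow> small (a powi k)"
  by (cases "k \<ge> 0") (simp_all add: power_int_def small_power small_inverse power_inverse[symmetric])

lemma small_divide: "small a \<Longrightarrow> small b \<Longrightarrow> small (a / b)"
  by (simp add: divide_inverse small_mult small_inverse)

lemma av_choose_div: "0 < k \<Longrightarrow> k < p \<Longrightarrow> absv (of_nat (p choose k) / of_nat p :: 'a) \<le> 1"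
proof -
  assume k: "0 < k" "k < p"
  have "absv (of_nat (p choose k) :: 'a) * real p \<le> (1 / real p) * real p"
    using av_choose[OF k] p_pos by (intro mult_right_mono) auto
  then show ?thesis using av_p p_pos by (simp add: av_divide)
qed

lemma p_ge3: "p \<ge> 3" using p_gt2 by simp

lemma phi_abs:
  assumes "small w"
  shows "absv (\<Sum>i<p. w ^ i) = 1 / real p"
proof -
  define t where "t = w - 1"
  have t: "absv t \<le> 1 / real p" using assms unfolding small_def t_def by simp
  have "(\<Sum>i<p. w ^ i) = (\<Sum>k<p. of_nat (p choose Suc k) * t ^ k)"
    using geom_binom[of t p] unfolding t_def by simp
  also have "\<dots> = of_nat p + (\<Sum>k\<in>{Suc 0..<p}. of_nat (p choose Suc k) * t ^ k)"
    using p_pos by (simp add: lessThan_atLeast0 sum.atLeast_Suc_lessThan)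
  finally have eq: "(\<Sum>i<p. w ^ i) = of_nat p + (\<Sum>k\<in>{Suc 0..<p}. of_nat (p choose Suc k) * t ^ k)" .
  have rest: "absv (\<Sum>k\<in>{Suc 0..<p}. of_nat (p choose Suc k) * t ^ k) < 1 / real p"
  proof (rule av_sum_less)
    fix k assume k: "k \<in> {Suc 0..<p}"
    have tk: "absv t ^ k \<le> (1 / real p) ^ k" using t by (intro power_mono) auto
    have pk: "(1 / real p) ^ k \<le> (1 / real p) ^ 1" using k p_pos by (intro power_decreasing) auto
    show "absv (of_nat (p choose Suc k) * t ^ k) < 1 / real p"
    proof (cases "Suc k < p")
      case True
      have "absv (of_nat (p choose Suc k) * t ^ k :: 'a) \<le> (1 / real p) * (1 / real p)"
        unfolding av_mult av_power using av_choose[of "Suc k"] True tk pk by (intro mult_mono) auto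
      also have "\<dots> < 1 / real p" using p_gt2 by (simp add: field_simps)
      finally show ?thesis .
    next
      case False
      then have "Suc k = p" using k by auto
      then have "k \<ge> 2" using p_gt2 by simp
      have "(1 / real p) ^ k \<le> (1 / real p) ^ 2"
        using \<open>k \<ge> 2\<close> p_pos by (intro power_decreasing) auto
      also have "\<dots> < 1 / real p" using p_gt2 by (simp add: field_simps power2_eq_square)
      finally show ?thesis using \<open>Suc k = p\<close> tk by (simp add: av_mult av_power)
    qed
  qed (use p_pos in simp)
  show ?thesis unfolding eq
    by (subst av_strict) (use rest av_p in simp_all)
qed

end



context qp begin

definition ef :: "nat \<Rightarrow> int" where "ef i = int (i div (p - 1))"

lemma ef_super: "ef i + ef j \<le> ef (i + j)"
  unfolding ef_def using div_add1_eq[of i j "p - 1"] by simp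

lemma ef_nonneg: "ef i \<ge> 0" by (simp add: ef_def)

lemma ef_0: "ef 0 = 0" by (simp add: ef_def)

lemma pb_add: "pb e f \<Longrightarrow> pb e g \<Longrightarrow> pb e (f + g)"
  unfolding pb_def by (simp add: av_add_le)

lemma pb_0: "pb e 0"
  unfolding pb_def using rp_powi_pos by (simp add: less_imp_le)

lemma pb_sum: "(\<And>k. k \<in> S \<Longrightarrow> pb e (f k)) \<Longrightarrow> pb e (sum f S)"
  by (induction S rule: infinite_finite_induct) (simp_all add: pb_0 pb_add)

lemma pb_mono: "pb e f \<Longrightarrow> (\<And>i. e i \<le> e' i) \<Longrightarrow> pb e' f"
  unfolding pb_def using rp_powi_mono order_trans by blast

lemma cb_pb: "cb 1 f \<Longrightarrow> (\<And>i. e i \<ge> 0) \<Longrightarrow> pb e f"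
  unfolding pb_def cb_def using rp_powi_mono[of 0] order_trans by fastforce

lemma pb_smult: "pb e f \<Longrightarrow> absv c \<le> real p powi d \<Longrightarrow> pb (\<lambda>i. e i + d) (smult c f)"
  unfolding pb_def by (auto simp: av_mult rp_powi_add mult.commute intro!: mult_mono)

lemma pb_L: "small w \<Longrightarrow> pb (\<lambda>i. int i - 1) [:w - 1, w:]"
  unfolding pb_def small_def using small_abs[of w] rp_powi_mono[of 0]
  by (auto simp: coeff_pCons power_int_minus small_def inverse_eq_divide split: nat.splits)

lemma cb_L: "small w \<Longrightarrow> cb 1 [:w - 1, w:]"
proof -
  assume w: "small w"
  have "1 / real p \<le> 1" using p_gt2 by simp
  then show ?thesis unfolding cb_def using w small_abs[OF w] unfolding small_def
    by (auto simp: coeff_pCons split: nat.splits)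
qed

lemma pb_power_lin: "pb (\<lambda>i. int i - c) f \<Longrightarrow> pb (\<lambda>i. int i - int k * c) (f ^ k)"
proof (induction k)
  case 0
  then show ?case by (simp add: pb_1)
next
  case (Suc k)
  then show ?case using pb_mult[of "\<lambda>i. int i - c" f "\<lambda>i. int i - int k * c" "f ^ k"]
    by (simp add: algebra_simps)
qed

lemma smult_sum_right: "smult c (sum f S) = (\<Sum>i\<in>S. smult c (f i))"
  by (induction S rule: infinite_finite_induct) (simp_all add: smult_add_right)

lemma of_nat_mult_poly: "(of_nat c :: 'a poly) * f = smult (of_nat c) f"
  by (simp add: of_nat_poly)

lemma gpoly_sum:
  "gpoly p w = (\<Sum>k<p. smult (of_nat (p choose Suc k) / of_nat p) ([:w - 1, w:] ^ k))"
proof -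
  have "[:w, w:] = 1 + [:w - 1, w:]" by (simp add: one_pCons)
  then have "(\<Sum>i<p. [:w, w:] ^ i) = (\<Sum>k<p. of_nat (p choose Suc k) * [:w - 1, w:] ^ k)"
    using geom_binom[of "[:w - 1, w:]" p] by simp
  moreover have "smult (1 / of_nat p) (of_nat (p choose Suc k) * [:w - 1, w:] ^ k) =
      smult (of_nat (p choose Suc k) / of_nat p) ([:w - 1, w:] ^ k)" for k
    by (simp add: of_nat_poly)
  ultimately show ?thesis unfolding gpoly_def by (simp only: smult_sum_right)
qed

lemma gpoly_pb:
  assumes "small w"
  shows "pb ef (gpoly p w)"
proof -
  define L where "L = [:w - 1, w:]"
  have sp: "{..<p} = insert (p - 1) {..<p - 1}" using p_pos by auto
  have "gpoly p w = smult (of_nat (p choose Suc (p - 1)) / of_nat p) (L ^ (p - 1)) +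
      (\<Sum>k<p - 1. smult (of_nat (p choose Suc k) / of_nat p) (L ^ k))"
    unfolding gpoly_sum L_def sp by simp
  also have "\<dots> = smult (1 / of_nat p) (L ^ (p - 1)) +
      (\<Sum>k<p - 1. smult (of_nat (p choose Suc k) / of_nat p) (L ^ k))"
    using p_pos by simp
  finally have eq: "gpoly p w = \<dots>" .
  have cbL: "cb 1 L" unfolding L_def using assms by (rule cb_L)
  have A: "pb ef (\<Sum>k<p - 1. smult (of_nat (p choose Suc k) / of_nat p) (L ^ k))"
  proof (rule pb_sum)
    fix k assume "k \<in> {..<p - 1}"
    then have "0 < Suc k" "Suc k < p" by auto
    then have "cb (absv (of_nat (p choose Suc k) / of_nat p :: 'a) * 1) (smult (of_nat (p choose Suc k) / of_nat p) (L ^ k))"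
      using cb_power[OF cbL, of k] by (intro cb_smult) simp
    then have "cb 1 (smult (of_nat (p choose Suc k) / of_nat p) (L ^ k))"
      using av_choose_div[OF \<open>0 < Suc k\<close> \<open>Suc k < p\<close>] cb_mono by fastforce
    then show "pb ef (smult (of_nat (p choose Suc k) / of_nat p) (L ^ k))"
      by (rule cb_pb) (rule ef_nonneg)
  qed
  have Lp: "pb (\<lambda>i. int i - int (p - 1) * 1) (L ^ (p - 1))"
    using pb_L[OF assms] unfolding L_def by (rule pb_power_lin)
  have Lp2: "pb (\<lambda>i. (int i - int (p - 1) * 1) + 1) (smult (1 / of_nat p) (L ^ (p - 1)))"
    using Lp by (rule pb_smult) (simp add: av_p_inv)
  have "degree L \<le> 1" unfolding L_def by (simp add: degree_pCons_eq_if)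
  then have degL: "degree (L ^ (p - 1)) \<le> p - 1"
    using degree_power_le[of L "p - 1"] by (metis le_trans mult_le_mono1 mult_1)
  have B: "pb ef (smult (1 / of_nat p) (L ^ (p - 1)))"
    unfolding pb_def
  proof
    fix i
    show "absv (coeff (smult (1 / of_nat p) (L ^ (p - 1))) i) \<le> real p powi ef i"
    proof (cases "i \<le> p - 1")
      case True
      have "int i - int (p - 1) * 1 + 1 \<le> ef i"
      proof (cases "i = p - 1")
        case True
        then show ?thesis using p_gt2 by (simp add: ef_def)
      next
        case False
        then show ?thesis using \<open>i \<le> p - 1\<close> ef_nonneg[of i] by simp
      qed
      then show ?thesis using Lp2 unfolding pb_def using rp_powi_mono order_trans by blast
    next
      case False
      then have "coeff (L ^ (p - 1)) i = 0" using degL by (intro coeff_eq_0) simp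
      then show ?thesis using rp_powi_pos by (simp add: less_imp_le)
    qed
  qed
  show ?thesis unfolding eq by (rule pb_add[OF B A])
qed

lemma gpoly_coeff0: "coeff (gpoly p w) 0 = (\<Sum>i<p. w ^ i) / of_nat p"
  unfolding gpoly_def by (simp add: coeff_sum coeff_0_power)

lemma gpoly_coeff0_abs: "small w \<Longrightarrow> absv (coeff (gpoly p w) 0) = 1"
  unfolding gpoly_coeff0 using phi_abs[of w] av_p p_pos by (simp add: av_divide)

lemma cb_gpoly: "small w \<Longrightarrow> cb (real p) (gpoly p w)"
proof -
  assume w: "small w"
  have "cb (real p ^ 0 * real p ^ 0) [:w, w:]" unfolding cb_def using small_abs[OF w]
    by (auto simp: coeff_pCons split: nat.splits)
  then have "cb 1 [:w, w:]" by simp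
  then have "cb 1 (\<Sum>i<p. [:w, w:] ^ i)" using cb_power[of 1] by (intro cb_sum) auto
  then show ?thesis unfolding gpoly_def using cb_smult[of 1 _ "1 / of_nat p"] av_p_inv by simp
qed

end



lemma div_key: "(d::nat) \<ge> 2 \<Longrightarrow> b \<ge> 1 \<Longrightarrow> (a + b) div d \<le> a div d + b"
proof -
  assume d: "d \<ge> 2" and b: "b \<ge> 1"
  have "(a + b) div d = a div d + b div d + (a mod d + b mod d) div d" by (rule div_add1_eq)
  moreover have "(a mod d + b mod d) div d \<le> 1"
  proof -
    have "a mod d < d" "b mod d < d" using d by simp_all
    then have "a mod d + b mod d < 2 * d" by linarith
    then have "(a mod d + b mod d) div d < 2" using d by (simp add: div_less_iff_less_mult mult.commute)
    then show ?thesis by simp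
  qed
  moreover have "b div d \<le> b div 2" by (rule div_le_mono2) (use d in simp_all)
  moreover have "b div 2 + 1 \<le> b" using b by presburger
  ultimately show ?thesis by linarith
qed

lemma div_key2: "(k::nat) \<ge> 2 * s \<Longrightarrow> d \<ge> 2 \<Longrightarrow> k div d + s + 1 \<le> k + 1"
proof -
  assume "k \<ge> 2 * s" "d \<ge> 2"
  have "k div d \<le> k div 2" by (rule div_le_mono2) (use \<open>d \<ge> 2\<close> in simp_all)
  moreover have "k div 2 + s \<le> k" using \<open>k \<ge> 2 * s\<close> by presburger
  ultimately show ?thesis by linarith
qed

lemma pCons0_mult: "pCons 0 f = [:0, 1:] * (f :: 'b::comm_ring_1 poly)"
  by simp

primrec Wseq :: "'b::field poly \<Rightarrow> nat \<Rightarrow> nat \<Rightarrow> 'b poly" where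
  "Wseq N s 0 = 1"
| "Wseq N s (Suc k) = pCons 0 (Wseq N s k) - smult (coeff (Wseq N s k) (s - 1) / lead_coeff N) N"

context qp begin

lemma ef_key:
  assumes "s \<ge> 1"
  shows "ef m + min 0 (int s - 1 - int m) \<le> ef (s - 1)"
proof (cases "m \<le> s - 1")
  case True
  then have "m div (p - 1) \<le> (s - 1) div (p - 1)" by (rule div_le_mono)
  then show ?thesis unfolding ef_def by simp
next
  case False
  define b where "b = m - (s - 1)"
  have b1: "b \<ge> 1" and mb: "m = (s - 1) + b" using False unfolding b_def by auto
  have "m div (p - 1) \<le> (s - 1) div (p - 1) + b"
    unfolding mb using p_gt2 b1 by (intro div_key) auto
  moreover have "min 0 (int s - 1 - int m) = - int b" using mb assms by simp
  ultimately show ?thesis unfolding ef_def by simp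
qed

lemma ef_key2:
  assumes "k \<ge> 2 * s"
  shows "ef k + (int s - 1 - int k) \<le> -1"
proof -
  have "k div (p - 1) + s + 1 \<le> k + 1" using assms p_gt2 by (intro div_key2) auto
  then show ?thesis unfolding ef_def by simp
qed

lemma av_prod: "absv (prod f S) = (\<Prod>i\<in>S. absv (f i))"
  by (induction S rule: infinite_finite_induct) (simp_all add: av_mult)

lemma pb_prod_lin:
  assumes "finite J" "\<And>j. j \<in> J \<Longrightarrow> pb (\<lambda>i. int i - 1) (f j)"
  shows "pb (\<lambda>i. int i - int (card J)) (prod f J)"
  using assms
proof (induction J rule: finite_induct)
  case empty
  then show ?case by (simp add: pb_1)
next
  case (insert x F)
  then show ?case
    using pb_mult[of "\<lambda>i. int i - 1" "f x" "\<lambda>i. int i - int (card F)" "prod f F" "\<lambda>i. int i - int (card (insert x F))"]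
    by simp
qed

section \<open>The sequence x^k mod N\<close>

context
  fixes N :: "'a poly" and s :: nat
  assumes degN: "degree N = s" and s1: "s \<ge> 1" and lcN: "absv (lead_coeff N) = 1"
    and pbN: "pb (\<lambda>i. int i - int s) N"
begin

lemma N_nz: "N \<noteq> 0" using lcN by auto

lemma W_high: "i \<ge> s \<Longrightarrow> coeff (Wseq N s k) i = 0"
proof (induction k arbitrary: i)
  case 0
  then show ?case using s1 by (simp add: coeff_1)
next
  case (Suc k)
  have lc0: "lead_coeff N \<noteq> 0" using N_nz by simp
  show ?case
  proof (cases "i = s")
    case True
    have "coeff (pCons 0 (Wseq N s k)) s = coeff (Wseq N s k) (s - 1)"
      using s1 by (cases s) auto
    then show ?thesis using True lc0 degN by simp
  next
    case False
    then have "i > s" using Suc.prems by simp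
    then obtain j where j: "i = Suc j" "j \<ge> s" by (cases i) auto
    have "coeff N i = 0" using \<open>i > s\<close> degN by (intro coeff_eq_0) simp
    then show ?thesis using Suc.IH[OF j(2)] j(1) by simp
  qed
qed

lemma W_dvd: "N dvd (monom 1 k - Wseq N s k)"
proof (induction k)
  case 0
  then show ?case by simp
next
  case (Suc k)
  define c where "c = coeff (Wseq N s k) (s - 1) / lead_coeff N"
  have eq: "monom 1 (Suc k) - Wseq N s (Suc k) = [:0, 1:] * (monom 1 k - Wseq N s k) + smult c N"
    unfolding c_def by (simp add: monom_Suc algebra_simps flip: pCons0_mult)
  show ?case by (subst eq) (intro dvd_add dvd_mult Suc.IH dvd_smult dvd_refl)
qed

lemma W_bound: "absv (coeff (Wseq N s k) i) \<le> real p powi (min 0 (int i - int k))"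
proof (induction k arbitrary: i)
  case 0
  then show ?case by (cases i) (simp_all add: coeff_1 less_imp_le[OF rp_powi_pos])
next
  case (Suc k)
  define c where "c = coeff (Wseq N s k) (s - 1) / lead_coeff N"
  have "coeff (Wseq N s (Suc k)) i = coeff (pCons 0 (Wseq N s k)) i - c * coeff N i"
    unfolding c_def by simp
  moreover have "absv (coeff (pCons 0 (Wseq N s k)) i) \<le> real p powi (min 0 (int i - int (Suc k)))"
  proof (cases i)
    case 0
    then show ?thesis by (simp add: less_imp_le[OF rp_powi_pos])
  next
    case (Suc j)
    then show ?thesis using Suc.IH[of j] by simp
  qed
  moreover have "absv (c * coeff N i) \<le> real p powi (min 0 (int i - int (Suc k)))"
  proof (cases "i \<le> s")
    case True
    have "absv c \<le> real p powi (min 0 (int (s - 1) - int k))"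
      unfolding c_def using Suc.IH[of "s - 1"] lcN by (simp add: av_divide)
    moreover have "absv (coeff N i) \<le> real p powi (int i - int s)" using pbN unfolding pb_def by blast
    ultimately have "absv (c * coeff N i) \<le> real p powi (min 0 (int (s - 1) - int k)) * real p powi (int i - int s)"
      unfolding av_mult by (intro mult_mono) auto
    also have "\<dots> = real p powi (min 0 (int (s - 1) - int k) + (int i - int s))"
      by (simp add: rp_powi_add)
    also have "\<dots> \<le> real p powi (min 0 (int i - int (Suc k)))"
      using True s1 by (intro rp_powi_mono) auto
    finally show ?thesis .
  next
    case False
    then have "coeff N i = 0" using degN by (intro coeff_eq_0) simp
    then show ?thesis by (simp add: less_imp_le[OF rp_powi_pos])
  qed
  ultimately show ?case by (simp add: av_diff_le)
qed

lemma W_cb: "cb (real p powi (min 0 (int s - 1 - int k))) (Wseq N s k)"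
  unfolding cb_def
proof
  fix i
  show "absv (coeff (Wseq N s k) i) \<le> real p powi (min 0 (int s - 1 - int k))"
  proof (cases "i \<ge> s")
    case True
    then show ?thesis using W_high by (simp add: less_imp_le[OF rp_powi_pos])
  next
    case False
    have "real p powi (min 0 (int i - int k)) \<le> real p powi (min 0 (int s - 1 - int k))"
      using False by (intro rp_powi_mono) auto
    then show ?thesis using W_bound[of k i] by linarith
  qed
qed

end

end



context qp begin

lemma reduce:
  assumes degN: "degree N = s" and s1: "s \<ge> 1" and lcN: "absv (lead_coeff N) = 1"
    and cbN: "cb 1 N" and cbA: "cb B A"
  shows "\<exists>r. (\<forall>i\<ge>s. coeff r i = 0) \<and> N dvd (A - r) \<and> cb B r"
  using cbA
proof (induction "degree A" arbitrary: A rule: less_induct)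
  case (less A)
  show ?case
  proof (cases "degree A < s")
    case True
    then have "\<forall>i\<ge>s. coeff A i = 0" by (auto intro: coeff_eq_0)
    then show ?thesis using less.prems by (intro exI[of _ A]) auto
  next
    case False
    define d where "d = degree A"
    define c where "c = lead_coeff A / lead_coeff N"
    define A' where "A' = A - monom c (d - s) * N"
    have N0: "lead_coeff N \<noteq> 0" using lcN by auto
    have ds: "d \<ge> s" using False unfolding d_def by simp
    have coeffA': "coeff A' d = 0"
      unfolding A'_def c_def using ds degN N0 by (simp add: coeff_monom_mult d_def)
    have degle: "degree (monom c (d - s) * N) \<le> d"
      using degree_mult_le[of "monom c (d - s)" N] degree_monom_le[of c "d - s"] degN ds by linarith
    have "degree A' \<le> d" unfolding A'_def using degle by (intro degree_diff_le) (simp_all add: d_def)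
    moreover have "degree A' \<noteq> d \<or> A' = 0"
      using coeffA' by (metis leading_coeff_0_iff)
    moreover have "d > 0" using ds s1 by simp
    ultimately have lt: "degree A' < degree A" unfolding d_def by (cases "A' = 0") auto
    have cA: "absv c \<le> B" unfolding c_def using less.prems lcN
      by (simp add: av_divide cb_def)
    have "cb B (monom c (d - s) * N)"
      unfolding cb_def
    proof
      fix i
      have "absv (coeff N (i - (d - s))) \<le> 1" using cbN unfolding cb_def by blast
      then have "absv c * absv (coeff N (i - (d - s))) \<le> B * 1"
        using cA by (intro mult_mono) (auto simp: cb_nonneg[OF less.prems])
      then show "absv (coeff (monom c (d - s) * N) i) \<le> B"
        using cb_nonneg[OF less.prems] by (simp add: coeff_monom_mult av_mult)
    qed
    then have "cb B A'" unfolding A'_def using less.prems by (rule cb_diff[rotated])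
    then obtain r where r: "\<forall>i\<ge>s. coeff r i = 0" "N dvd (A' - r)" "cb B r"
      using less.hyps[OF lt] by blast
    have eq: "A - r = (A' - r) + monom c (d - s) * N" unfolding A'_def by simp
    have "N dvd (A - r)" unfolding eq by (intro dvd_add r(2) dvd_mult dvd_refl)
    then show ?thesis using r by blast
  qed
qed

lemma low_zero:
  fixes f N :: "'a poly"
  assumes "\<forall>i\<ge>s. coeff f i = 0" "N dvd f" "degree N = s"
  shows "f = 0"
proof (rule ccontr)
  assume "f \<noteq> 0"
  then have "degree N \<le> degree f" using assms(2) by (metis dvd_imp_degree_le)
  moreover have "degree f < s"
  proof (rule ccontr)
    assume "\<not> degree f < s"
    then have "coeff f (degree f) = 0" using assms(1) by simp
    then show False using \<open>f \<noteq> 0\<close> by simp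
  qed
  ultimately show False using assms(3) by simp
qed

end



context qp begin

lemma low_sum: "(\<And>k. k \<in> S \<Longrightarrow> \<forall>i\<ge>s. coeff (f k) i = 0) \<Longrightarrow> \<forall>i\<ge>s. coeff (sum f S) i = 0"
  by (simp add: coeff_sum)

lemma main_bound:
  fixes K J :: "int set" and w :: "int \<Rightarrow> 'a" and R :: "'a poly"
  assumes finJ: "finite J" and neJ: "J \<noteq> {}" and finK: "finite K"
    and sm: "\<And>k. small (w k)"
    and degR: "degree R < card J"
    and dv: "(\<Prod>j\<in>J. [:w j - 1, w j:]) dvd R * (\<Prod>k\<in>K. gpoly p (w k)) - 1"
  shows "cb (real p powi ef (card J - 1)) R"
proof -
  define s where "s = card J"
  define G where "G = (\<Prod>k\<in>K. gpoly p (w k))"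
  define N where "N = (\<Prod>j\<in>J. [:w j - 1, w j:])"
  define B where "B = real p powi ef (s - 1)"
  have s1: "s \<ge> 1" using finJ neJ by (simp add: s_def card_gt_0_iff Suc_le_eq)
  have wnz: "w j \<noteq> 0" for j using small_abs[OF sm[of j]] by auto
  have Lnz: "[:w j - 1, w j:] \<noteq> 0" for j using wnz by auto
  have degN: "degree N = s" unfolding N_def s_def
    by (subst degree_prod_sum_eq) (use Lnz wnz finJ in auto)
  have lcN: "absv (lead_coeff N) = 1" unfolding N_def lead_coeff_prod
    using wnz small_abs[OF sm] by (simp add: av_prod)
  have cbN: "cb 1 N" unfolding N_def using cb_prod[of J "\<lambda>_. 1" "\<lambda>j. [:w j - 1, w j:]"] cb_L[OF sm] by simp
  have pbN: "pb (\<lambda>i. int i - int s) N" unfolding N_def s_def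
    using finJ by (rule pb_prod_lin) (rule pb_L[OF sm])
  have pbG: "pb ef G" unfolding G_def
    by (rule pb_prod) (use gpoly_pb[OF sm] ef_super ef_0 in auto)
  have G0: "absv (coeff G 0) = 1"
  proof -
    have "absv (poly (gpoly p (w k)) 0) = 1" for k
      using gpoly_coeff0_abs[OF sm[of k]] by (simp add: poly_0_coeff_0)
    then show ?thesis unfolding G_def poly_0_coeff_0[symmetric] poly_prod av_prod by simp
  qed
  define FG where "FG = fps_of_poly G"
  define H where "H = inverse FG"
  have FG0: "FG $ 0 \<noteq> 0" using G0 unfolding FG_def by auto
  have fbH: "fb ef H" unfolding H_def
    by (rule fb_inverse) (use pbG G0 ef_0 ef_super in \<open>auto simp: pb_fb FG_def\<close>)
  have HG: "H * FG = 1" unfolding H_def using FG0 by (rule inverse_mult_eq_1)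
  define M where "M = 2 * s"
  define W where "W = Wseq N s"
  define T where "T = (\<Sum>m<M. monom (H $ m) m)"
  define S where "S = (\<Sum>m<M. smult (H $ m) (W m))"
  define E where "E = T * G - 1"
  define E' where "E' = (\<Sum>k\<le>degree E. smult (coeff E k) (W k))"
  note Whigh = W_high[OF degN s1 lcN pbN]
  note Wdvd = W_dvd[OF degN s1 lcN pbN]
  note Wcb = W_cb[OF degN s1 lcN pbN]
  have coeffT: "coeff T i = (if i < M then H $ i else 0)" for i
    unfolding T_def by (simp add: coeff_sum coeff_monom)
  have pbT: "pb ef T" unfolding pb_def coeffT
    using fbH rp_powi_pos unfolding fb_def by (auto simp: less_imp_le)
  have E_low: "coeff E k = 0" if "k < M" for k
  proof -
    have "coeff (T * G) k = (\<Sum>i\<le>k. coeff T i * coeff G (k - i))" by (rule coeff_mult)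
    also have "\<dots> = (\<Sum>i\<le>k. H $ i * FG $ (k - i))"
      using that by (intro sum.cong) (auto simp: coeffT FG_def)
    also have "\<dots> = (H * FG) $ k" by (simp add: fps_mult_nth atLeast0AtMost)
    also have "\<dots> = coeff 1 k" using HG by (simp add: coeff_1)
    finally show ?thesis unfolding E_def by simp
  qed
  have E_high: "absv (coeff E k) \<le> real p powi ef k" if "k \<ge> M" for k
  proof -
    have "k \<noteq> 0" using that s1 unfolding M_def by simp
    then have "coeff E k = coeff (T * G) k" unfolding E_def by (simp add: coeff_1)
    moreover have "pb ef (T * G)" using pbT pbG ef_super by (rule pb_mult)
    ultimately show ?thesis unfolding pb_def by simp
  qed
  have dTS: "N dvd T - S"
  proof -
    have "T - S = (\<Sum>m<M. smult (H $ m) (monom 1 m - W m))"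
      unfolding T_def S_def by (simp add: sum_subtractf smult_diff_right smult_monom)
    then show ?thesis using Wdvd unfolding W_def by (simp add: dvd_sum dvd_smult)
  qed
  have dEE: "N dvd E - E'"
  proof -
    have "E = (\<Sum>k\<le>degree E. monom (coeff E k) k)" by (simp add: poly_as_sum_of_monoms)
    then have "E - E' = (\<Sum>k\<le>degree E. smult (coeff E k) (monom 1 k - W k))"
      unfolding E'_def by (simp add: sum_subtractf smult_diff_right smult_monom)
    then show ?thesis using Wdvd unfolding W_def by (simp add: dvd_sum dvd_smult)
  qed
  have lowS: "\<forall>i\<ge>s. coeff S i = 0" unfolding S_def W_def by (simp add: coeff_sum Whigh)
  have cbS: "cb B S" unfolding S_def
  proof (rule cb_sum)
    fix m assume "m \<in> {..<M}"
    have "cb (absv (H $ m) * real p powi (min 0 (int s - 1 - int m))) (smult (H $ m) (W m))"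
      unfolding W_def by (rule cb_smult[OF Wcb])
    moreover have "absv (H $ m) * real p powi (min 0 (int s - 1 - int m)) \<le> B"
    proof -
      have "absv (H $ m) * real p powi (min 0 (int s - 1 - int m)) \<le> real p powi ef m * real p powi (min 0 (int s - 1 - int m))"
        using fbH unfolding fb_def by (intro mult_right_mono) (auto simp: less_imp_le[OF rp_powi_pos])
      also have "\<dots> = real p powi (ef m + min 0 (int s - 1 - int m))" by (simp add: rp_powi_add)
      also have "\<dots> \<le> B" unfolding B_def using ef_key[OF s1, of m] by (rule rp_powi_mono)
      finally show ?thesis .
    qed
    ultimately show "cb B (smult (H $ m) (W m))" by (rule cb_mono)
  qed (simp add: B_def less_imp_le[OF rp_powi_pos])
  have cbE': "cb (1 / real p) E'" unfolding E'_def
  proof (rule cb_sum)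
    fix k assume "k \<in> {..degree E}"
    show "cb (1 / real p) (smult (coeff E k) (W k))"
    proof (cases "k < M")
      case True
      then show ?thesis using E_low[OF True] by (simp add: cb_0)
    next
      case False
      then have kM: "k \<ge> M" by simp
      have "cb (absv (coeff E k) * real p powi (min 0 (int s - 1 - int k))) (smult (coeff E k) (W k))"
        unfolding W_def by (rule cb_smult[OF Wcb])
      moreover have "absv (coeff E k) * real p powi (min 0 (int s - 1 - int k)) \<le> 1 / real p"
      proof -
        have mn: "min 0 (int s - 1 - int k) = int s - 1 - int k" using kM s1 unfolding M_def by simp
        have "absv (coeff E k) * real p powi (min 0 (int s - 1 - int k)) \<le> real p powi ef k * real p powi (min 0 (int s - 1 - int k))"
          using E_high[OF kM] by (intro mult_right_mono) (auto simp: less_imp_le[OF rp_powi_pos])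
        also have "\<dots> = real p powi (ef k + (int s - 1 - int k))" by (simp add: rp_powi_add mn)
        also have "\<dots> \<le> real p powi (-1)" using ef_key2[of s k] kM unfolding M_def by (intro rp_powi_mono) auto
        finally show ?thesis by (simp add: power_int_minus inverse_eq_divide)
      qed
      ultimately show ?thesis by (rule cb_mono)
    qed
  qed (simp add: p_pos)
  have lowE': "\<forall>i\<ge>s. coeff E' i = 0" unfolding E'_def W_def by (simp add: coeff_sum Whigh)
  define \<rho> where "\<rho> = norm1 absv R"
  have cbRE: "cb (\<rho> * (1 / real p)) (- (R * E'))" unfolding \<rho>_def
    by (rule cb_uminus, rule cb_mult[OF cb_norm1 cbE'])
  obtain r where r: "\<forall>i\<ge>s. coeff r i = 0" "N dvd (- (R * E')) - r" "cb (\<rho> * (1 / real p)) r"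
    using reduce[OF degN s1 lcN cbN cbRE] by blast
  have dvR: "N dvd R * G - 1" using dv unfolding N_def G_def .
  have eq: "R - S - r = ((- (R * E')) - r) + (T - S) + T * (R * G - 1) - R * (E - E')"
    unfolding E_def by (simp add: algebra_simps)
  have "N dvd R - S - r" unfolding eq
    by (intro dvd_add dvd_diff r(2) dTS dvd_mult dvR dEE)
  moreover have "\<forall>i\<ge>s. coeff (R - S - r) i = 0"
    using lowS r(1) degR unfolding s_def by (auto intro: coeff_eq_0)
  ultimately have "R - S - r = 0" using low_zero degN by blast
  then have RSr: "R = S + r" by (simp add: algebra_simps)
  have "cb (max B (\<rho> * (1 / real p))) R" unfolding RSr
    by (intro cb_add; rule cb_mono) (use cbS r(3) in auto)
  then have "\<rho> \<le> max B (\<rho> * (1 / real p))" unfolding \<rho>_def by (rule norm1_le)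
  moreover have "\<rho> \<ge> 0" unfolding \<rho>_def by (rule norm1_nonneg)
  moreover have "B > 0" unfolding B_def by (rule rp_powi_pos)
  ultimately have "\<rho> \<le> B" using p_gt2
    by (cases "\<rho> \<le> B") (auto simp: max_def field_simps split: if_splits)
  then show ?thesis using cb_norm1[of R] unfolding \<rho>_def B_def s_def by (rule cb_mono[rotated])
qed

end



lemma lin_pow_props:
  fixes c :: "'b::field"
  assumes "c \<noteq> 0" "K \<ge> 1"
  shows "degree ([:c, c:] ^ K - 1) = K" "coeff ([:c, c:] ^ K - 1) K = c ^ K"
proof -
  have d: "degree ([:c, c:] ^ K) = K" using assms by (simp add: degree_power_eq)
  have l: "coeff ([:c, c:] ^ K) K = c ^ K" using lead_coeff_power[of "[:c, c:]" K] d assms by simp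
  show co: "coeff ([:c, c:] ^ K - 1) K = c ^ K" using l assms by (simp add: coeff_1)
  have "degree ([:c, c:] ^ K - 1) \<le> K" using d by (intro degree_diff_le) auto
  moreover have "K \<le> degree ([:c, c:] ^ K - 1)" using co assms by (intro le_degree) simp
  ultimately show "degree ([:c, c:] ^ K - 1) = K" by simp
qed

lemma pcompose_lin_eq: "pcompose [:w, w:] q = smult w (q + 1)"
  by (simp add: pcompose_pCons algebra_simps smult_add_right one_pCons)

locale qpx = qp +
  fixes u :: 'a and a :: int and n :: nat
  assumes su: "small u" and n1: "n \<ge> 1"
begin

definition "NN = p ^ (n - 1)"
definition "cc j = u powi (- j)"
definition "qq = twist u a (omega p (n - 1))"
definition "ww j = cc j ^ NN / cc a ^ NN"

lemma NN_pos: "NN \<ge> 1" unfolding NN_def using p_pos by simp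

lemma u_nz: "u \<noteq> 0" using small_abs[OF su] by auto

lemma cc_small: "small (cc j)" unfolding cc_def by (rule small_powi[OF su])

lemma cc_nz: "cc j \<noteq> 0" using small_abs[OF cc_small, of j] by auto

lemma ww_small: "small (ww j)" unfolding ww_def
  by (intro small_divide small_power cc_small)

lemma ww_nz: "ww j \<noteq> 0" using small_abs[OF ww_small, of j] by auto

lemma ww_a: "ww a = 1" unfolding ww_def using cc_nz by simp

lemma qq_eq: "qq = [:cc a, cc a:] ^ NN - 1"
  unfolding qq_def NN_def cc_def by (rule twist_omega)

lemma Y_eq: "[:cc j, cc j:] ^ NN = pcompose [:ww j, ww j:] qq"
proof -
  have a: "[:cc a, cc a:] ^ NN = smult (cc a ^ NN) ([:1, 1:] ^ NN)"
    by (simp add: smult_power[symmetric])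
  have "[:1, 1:] ^ NN = smult (1 / cc a ^ NN) (qq + 1)"
    unfolding qq_eq a using cc_nz by simp
  moreover have "[:cc j, cc j:] ^ NN = smult (cc j ^ NN) ([:1, 1:] ^ NN)"
    by (simp add: smult_power[symmetric])
  ultimately show ?thesis unfolding pcompose_lin_eq ww_def by (simp add: field_simps)
qed

lemma tw_om1: "twist u j (omega p (n - 1)) = pcompose [:ww j - 1, ww j:] qq"
proof -
  have "twist u j (omega p (n - 1)) = [:cc j, cc j:] ^ NN - 1"
    unfolding twist_omega cc_def NN_def ..
  also have "\<dots> = pcompose ([:ww j, ww j:] - 1) qq" unfolding Y_eq by (simp add: pcompose_diff pcompose_1)
  also have "[:ww j, ww j:] - 1 = [:ww j - 1, ww j:]" by (simp add: one_pCons)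
  finally show ?thesis .
qed

lemma pn_eq: "p ^ n = NN * p"
  unfolding NN_def using n1 by (cases n) auto

lemma tw_om: "twist u j (omega p n) = pcompose ([:ww j, ww j:] ^ p - 1) qq"
proof -
  have "twist u j (omega p n) = ([:cc j, cc j:] ^ NN) ^ p - 1"
    unfolding twist_omega cc_def pn_eq by (simp add: power_mult)
  then show ?thesis unfolding Y_eq by (simp add: pcompose_diff pcompose_1 pcompose_power_left)
qed

lemma tw_xi: "twist u j (xi p n) = pcompose (\<Sum>i<p. [:ww j, ww j:] ^ i) qq"
proof -
  have "twist u j (xi p n) = (\<Sum>i<p. ([:cc j, cc j:] ^ NN) ^ i)"
    unfolding twist_def xi_eq[OF n1 p_pos[THEN less_imp_neq, symmetric]]
    by (simp add: pcompose_sum pcompose_power_left pcompose_lin_11 cc_def NN_def)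
  then show ?thesis unfolding Y_eq by (simp add: pcompose_sum pcompose_power_left)
qed

lemma tw_xi_g: "smult (1 / of_nat p) (twist u j (xi p n)) = pcompose (gpoly p (ww j)) qq"
  unfolding tw_xi gpoly_def by (simp add: pcompose_smult)

lemma ellS_eq: "ellS p u n S = pcompose (\<Prod>k\<in>S. gpoly p (ww k)) qq"
  unfolding ellS_def tw_xi_g by (simp add: pcompose_prod)

lemma omegaS1_eq: "omegaS p u (n - 1) S = pcompose (\<Prod>j\<in>S. [:ww j - 1, ww j:]) qq"
  unfolding omegaS_def tw_om1 by (simp add: pcompose_prod)

lemma deg_qq: "degree qq = NN"
  unfolding qq_eq using lin_pow_props(1)[OF cc_nz NN_pos] .

lemma cb_qq: "cb 1 qq"
proof -
  have "cb 1 [:cc a, cc a:]" unfolding cb_def using small_abs[OF cc_small]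
    by (auto simp: coeff_pCons split: nat.splits)
  then have "cb 1 ([:cc a, cc a:] ^ NN)" using cb_power[of 1] by fastforce
  then show ?thesis unfolding qq_eq by (intro cb_diff cb_1)
qed

lemma tw_omega_deg: "degree (twist u j (omega p m)) = p ^ m"
proof -
  have "1 \<le> p ^ m" using p_pos by simp
  then show ?thesis unfolding twist_omega using lin_pow_props(1)[of "u powi - j" "p ^ m"] cc_nz[of j]
    unfolding cc_def by blast
qed

lemma tw_omega_nz: "twist u j (omega p m) \<noteq> 0"
proof
  assume "twist u j (omega p m) = 0"
  then have "degree (twist u j (omega p m)) = 0" by simp
  then show False unfolding tw_omega_deg using p_pos by simp
qed

lemma tw_omega_norm: "norm1 absv (twist u j (omega p m)) = 1"
proof (rule antisym)
  have "cb 1 [:u powi - j, u powi - j:]" unfolding cb_def using small_abs[OF cc_small[unfolded cc_def]]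
    by (auto simp: coeff_pCons split: nat.splits)
  then have "cb 1 ([:u powi - j, u powi - j:] ^ (p ^ m))" using cb_power[of 1] by fastforce
  then show "norm1 absv (twist u j (omega p m)) \<le> 1"
    unfolding twist_omega by (intro norm1_le cb_diff cb_1)
  have "coeff (twist u j (omega p m)) (p ^ m) = (u powi - j) ^ (p ^ m)"
    unfolding twist_omega using lin_pow_props(2)[of "u powi - j" "p ^ m"] p_pos cc_nz[unfolded cc_def]
    by (simp add: Suc_leI)
  then have "absv (coeff (twist u j (omega p m)) (p ^ m)) = 1"
    using small_abs[OF cc_small[unfolded cc_def]] by (simp add: av_power)
  then show "1 \<le> norm1 absv (twist u j (omega p m))" using norm1_ge by (metis order_refl)
qed

lemma tw_omega_split: "twist u j (omega p n) = twist u j (omega p (n - 1)) * twist u j (xi p n)"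
  unfolding twist_def omega_xi[OF n1 p_pos[THEN less_imp_neq, symmetric]] by (simp add: pcompose_mult)

lemma tw_xi_norm: "norm1 absv (twist u j (xi p n)) = 1"
  using tw_omega_norm[of j n] tw_omega_norm[of j "n - 1"] unfolding tw_omega_split norm1_mult by simp

end



definition bez :: "'b::comm_ring_1 \<Rightarrow> 'b \<Rightarrow> bool" where
  "bez A B \<longleftrightarrow> (\<exists>s t. s * A + t * B = 1)"

lemma bez_lincomb:
  fixes A B C :: "'b::field poly"
  assumes "A - C * B = [:e:]" "e \<noteq> 0"
  shows "bez A B"
proof -
  have "smult (1 / e) A - smult (1 / e) C * B = smult (1 / e) [:e:]"
    using arg_cong[OF assms(1), of "smult (1 / e)"] by (simp add: smult_diff_right)
  also have "\<dots> = 1" using assms(2) by (simp add: one_pCons)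
  finally show ?thesis unfolding bez_def
    by (intro exI[of _ "[:1 / e:]"] exI[of _ "- smult (1 / e) C"]) (simp add: algebra_simps)
qed

lemma bez_dvd:
  assumes "bez A B" "A' dvd A" "B' dvd B"
  shows "bez A' B'"
proof -
  obtain s t where st: "s * A + t * B = 1" using assms(1) unfolding bez_def by blast
  obtain k where k: "A = A' * k" using assms(2) by blast
  obtain l where l: "B = B' * l" using assms(3) by blast
  have "(s * k) * A' + (t * l) * B' = 1" using st k l by (simp add: algebra_simps)
  then show ?thesis unfolding bez_def by blast
qed

lemma bez_mult:
  assumes "bez A B1" "bez A B2"
  shows "bez A (B1 * B2)"
proof -
  obtain s1 t1 where 1: "s1 * A + t1 * B1 = 1" using assms(1) unfolding bez_def by blast
  obtain s2 t2 where 2: "s2 * A + t2 * B2 = 1" using assms(2) unfolding bez_def by blast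
  have "(s1 * A + t1 * B1) * (s2 * A + t2 * B2) = 1" using 1 2 by simp
  then have "(s1 * s2 * A + s1 * t2 * B2 + t1 * B1 * s2) * A + (t1 * t2) * (B1 * B2) = 1"
    by (simp add: algebra_simps)
  then show ?thesis unfolding bez_def by blast
qed

lemma bez_prod:
  assumes "finite S" "\<And>j. j \<in> S \<Longrightarrow> bez A (f j)"
  shows "bez A (prod f S)"
  using assms
proof (induction S rule: finite_induct)
  case empty
  then show ?case unfolding bez_def by (intro exI[of _ 0] exI[of _ 1]) simp
next
  case (insert x F)
  then show ?case by (simp add: bez_mult)
qed

lemma bez_sym: "bez A B \<Longrightarrow> bez B A"
  unfolding bez_def by (metis add.commute)

lemma bez_divides_mult:
  assumes "bez A B" "A dvd D" "B dvd D"
  shows "A * B dvd D"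
proof -
  obtain s t where st: "s * A + t * B = 1" using assms(1) unfolding bez_def by blast
  obtain k where k: "D = B * k" using assms(3) by blast
  obtain l where l: "D = A * l" using assms(2) by blast
  have "D = s * A * D + t * B * D" using st by (metis distrib_right mult_1)
  also have "\<dots> = s * A * (B * k) + t * B * (A * l)" using k l by metis
  also have "\<dots> = (A * B) * (s * k + t * l)" by (simp add: algebra_simps)
  finally show ?thesis by (rule dvdI)
qed

lemma prod_dvd_bez:
  fixes f :: "'c \<Rightarrow> 'b::comm_ring_1"
  assumes "finite S" "\<And>j k. j \<in> S \<Longrightarrow> k \<in> S \<Longrightarrow> j \<noteq> k \<Longrightarrow> bez (f j) (f k)"
    "\<And>j. j \<in> S \<Longrightarrow> f j dvd D"
  shows "prod f S dvd D"
  using assms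
proof (induction S rule: finite_induct)
  case empty
  then show ?case by simp
next
  case (insert x F)
  have "bez (f x) (prod f F)"
    by (rule bez_prod) (use insert.prems insert.hyps in auto)
  moreover have "prod f F dvd D" using insert.IH insert.prems by auto
  ultimately show ?case using insert.prems insert.hyps by (simp add: bez_divides_mult)
qed

context qp begin

lemma torsion_nat:
  assumes su: "small u" and u1: "u \<noteq> 1" and m: "m > 0"
  shows "u ^ m \<noteq> 1"
  using m
proof (induction m rule: less_induct)
  case (less m)
  show ?case
  proof (cases "p dvd m")
    case True
    then obtain m1 where m1: "m = p * m1" by blast
    then have "m1 > 0" "m1 < m" using less.prems p_gt2 by auto
    then have y1: "u ^ m1 \<noteq> 1" using less.IH by blast
    have sy: "small (u ^ m1)" using su by (rule small_power)
    have "u ^ m - 1 = (u ^ m1 - 1) * (\<Sum>i<p. (u ^ m1) ^ i)"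
      unfolding m1 by (simp add: power_mult power_diff_1_eq mult.commute)
    moreover have "(\<Sum>i<p. (u ^ m1) ^ i) \<noteq> 0" using phi_abs[OF sy] p_pos by auto
    ultimately show ?thesis using y1 by auto
  next
    case False
    define t where "t = u - 1"
    have t: "absv t \<le> 1 / real p" using su unfolding small_def t_def .
    have "u ^ m - 1 = (u - 1) * (\<Sum>i<m. u ^ i)" by (rule power_diff_1_eq)
    moreover have "(\<Sum>i<m. u ^ i) = (\<Sum>k<m. of_nat (m choose Suc k) * t ^ k)"
      using geom_binom[of t m] unfolding t_def by simp
    moreover have "\<dots> = of_nat m + (\<Sum>k\<in>{Suc 0..<m}. of_nat (m choose Suc k) * t ^ k)"
      using less.prems by (simp add: lessThan_atLeast0 sum.atLeast_Suc_lessThan)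
    moreover have "absv (\<Sum>k\<in>{Suc 0..<m}. of_nat (m choose Suc k) * t ^ k) < 1"
    proof (rule av_sum_less)
      fix k assume k: "k \<in> {Suc 0..<m}"
      have "1 / real p \<le> 1" using p_gt2 by simp
      then have "absv t ^ k \<le> absv t ^ 1" using k t by (intro power_decreasing) auto
      moreover have "absv t < 1" using t p_gt2 by (simp add: le_less_trans[OF _ divide_less_eq_1_pos[THEN iffD2]])
      ultimately have "absv t ^ k < 1" by simp
      have "absv (of_nat (m choose Suc k) :: 'a) * absv t ^ k \<le> 1 * absv t ^ k"
        using av_of_nat_le[of "m choose Suc k"] by (intro mult_right_mono) auto
      then show "absv (of_nat (m choose Suc k) * t ^ k) < 1"
        using \<open>absv t ^ k < 1\<close> by (simp add: av_mult av_power)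
    qed simp
    moreover have "absv (of_nat m :: 'a) = 1" using False by (rule av_of_nat_coprime)
    ultimately have "absv (\<Sum>i<m. u ^ i) = 1"
      using av_strict by (metis (no_types, lifting))
    then have "(\<Sum>i<m. u ^ i) \<noteq> 0" by auto
    then show ?thesis using \<open>u ^ m - 1 = _\<close> u1 by auto
  qed
qed

lemma torsion:
  assumes "small u" "u \<noteq> 1" "m \<noteq> 0"
  shows "u powi m \<noteq> 1"
proof (cases "m > 0")
  case True
  then have "u powi m = u ^ nat m" by (simp add: power_int_def)
  then show ?thesis using torsion_nat[OF assms(1,2), of "nat m"] True by simp
next
  case False
  then have "m < 0" using assms(3) by simp
  then have "u powi m = inverse (u ^ nat (- m))" by (simp add: power_int_def power_inverse)
  moreover have "u ^ nat (- m) \<noteq> 1" using torsion_nat[OF assms(1,2), of "nat (- m)"] \<open>m < 0\<close> by simp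
  ultimately show ?thesis by (metis inverse_1 inverse_inverse_eq)
qed

end

context qpx begin

lemma ww_ratio: "(ww j / ww k) ^ p = u powi ((k - j) * int (NN * p))"
proof -
  have "ww j / ww k = (cc j / cc k) ^ NN"
  proof -
    have "cc a ^ NN \<noteq> 0" "cc k ^ NN \<noteq> 0" using cc_nz by auto
    then show ?thesis unfolding ww_def power_divide by (simp add: field_simps)
  qed
  moreover have "cc j / cc k = u powi (k - j)"
    unfolding cc_def using u_nz by (simp add: power_int_diff[symmetric])
  ultimately show ?thesis by (simp add: power_int_power' power_mult mult.assoc)
qed

end



lemma pcompose_dvd: "A dvd B \<Longrightarrow> pcompose A q dvd pcompose B q"
  by (auto simp: dvd_def pcompose_mult)

context qp begin

lemma unit_coeff0:
  assumes "cb 1 F" "absv x < 1" "absv (poly F x) = 1"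
  shows "absv (coeff F 0) = 1"
proof -
  obtain c F' where F: "F = pCons c F'" by (cases F) auto
  have "cb 1 F'" using assms(1) unfolding F cb_def by (metis coeff_pCons_Suc)
  then have "absv (poly F' x) \<le> 1" using poly_le_norm1[of x F'] norm1_le[of 1 F'] assms(2) by simp
  then have "absv x * absv (poly F' x) \<le> absv x * 1" by (intro mult_left_mono) auto
  then have "absv (x * poly F' x) < 1" using assms(2) by (simp add: av_mult)
  moreover have "absv c \<le> 1" using assms(1) unfolding F cb_def by (metis coeff_pCons_0)
  moreover have "absv (c + x * poly F' x) = 1" using assms(3) unfolding F by simp
  ultimately show ?thesis unfolding F using av_add_less[of c 1 "x * poly F' x"] by force
qed

lemma Nz_props:
  assumes finJ: "finite J" and sm: "\<And>j. small (w j)"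
  shows "degree (\<Prod>j\<in>J. [:w j - 1, w j:]) = card J"
    "absv (lead_coeff (\<Prod>j\<in>J. [:w j - 1, w j:])) = 1"
    "cb 1 (\<Prod>j\<in>J. [:w j - 1, w j:])"
proof -
  have wnz: "w j \<noteq> 0" for j using small_abs[OF sm[of j]] by auto
  have Lnz: "[:w j - 1, w j:] \<noteq> 0" for j using wnz by auto
  show "degree (\<Prod>j\<in>J. [:w j - 1, w j:]) = card J"
    by (subst degree_prod_sum_eq) (use Lnz wnz finJ in auto)
  show "absv (lead_coeff (\<Prod>j\<in>J. [:w j - 1, w j:])) = 1" unfolding lead_coeff_prod
    using wnz small_abs[OF sm] by (simp add: av_prod)
  show "cb 1 (\<Prod>j\<in>J. [:w j - 1, w j:])"
    using cb_prod[of J "\<lambda>_. 1" "\<lambda>j. [:w j - 1, w j:]"] cb_L[OF sm] by simp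
qed

lemma low_degree:
  fixes f :: "'a poly"
  assumes "s \<ge> 1" "\<forall>i\<ge>s. coeff f i = 0"
  shows "degree f < s"
proof (rule ccontr)
  assume "\<not> degree f < s"
  then have "coeff f (degree f) = 0" using assms(2) by simp
  then have "f = 0" by simp
  then show False using \<open>\<not> degree f < s\<close> assms(1) by simp
qed

lemma gpoly_degree: "degree (gpoly p w) \<le> p - 1"
proof -
  have "degree ([:w, w:] ^ i) \<le> p - 1" if "i < p" for i
    using degree_power_le[of "[:w, w:]" i] that by (auto simp: degree_pCons_eq_if split: if_splits)
  then have "degree (\<Sum>i<p. [:w, w:] ^ i) \<le> p - 1" by (intro degree_sum_le) auto
  then show ?thesis unfolding gpoly_def using degree_smult_le order_trans by blast
qed

lemma poly_gpoly: "poly (gpoly p w) z = (\<Sum>i<p. (w * (1 + z)) ^ i) / of_nat p"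
  unfolding gpoly_def by (simp add: poly_sum algebra_simps)

end

context qpx begin

abbreviation "Ls j \<equiv> [:ww j - 1, ww j:]"

lemma tw_bez:
  assumes u1: "u \<noteq> 1" and jk: "j \<noteq> k"
  shows "bez (twist u j (omega p n)) (twist u k (omega p n))"
proof -
  define \<rho> where "\<rho> = (ww j / ww k) ^ p"
  have "\<rho> \<noteq> 1" unfolding \<rho>_def ww_ratio using jk p_pos NN_pos
    by (intro torsion[OF su u1]) auto
  have yj: "[:ww j, ww j:] = smult (ww j / ww k) [:ww k, ww k:]" using ww_nz[of k] by simp
  have yp: "[:ww j, ww j:] ^ p = smult \<rho> ([:ww k, ww k:] ^ p)"
  proof -
    have "[:ww j, ww j:] ^ p = (smult (ww j / ww k) [:ww k, ww k:]) ^ p" by (subst yj) (rule refl)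
    also have "\<dots> = smult \<rho> ([:ww k, ww k:] ^ p)" unfolding \<rho>_def by (rule smult_power)
    finally show ?thesis .
  qed
  have "([:ww j, ww j:] ^ p - 1) - smult \<rho> ([:ww k, ww k:] ^ p - 1) = smult \<rho> 1 - 1"
    by (simp add: yp smult_diff_right)
  also have "\<dots> = [:\<rho> - 1:]" by (simp add: one_pCons)
  finally have "([:ww j, ww j:] ^ p - 1) - smult \<rho> ([:ww k, ww k:] ^ p - 1) = [:\<rho> - 1:]" .
  then have "pcompose (([:ww j, ww j:] ^ p - 1) - smult \<rho> ([:ww k, ww k:] ^ p - 1)) qq = [:\<rho> - 1:]"
    by (simp only: pcompose_const)
  then have "pcompose ([:ww j, ww j:] ^ p - 1) qq - smult \<rho> (pcompose ([:ww k, ww k:] ^ p - 1) qq) = [:\<rho> - 1:]"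
    by (simp only: pcompose_diff pcompose_smult)
  then have "twist u j (omega p n) - [:\<rho>:] * twist u k (omega p n) = [:\<rho> - 1:]"
    unfolding tw_om by simp
  then show ?thesis by (rule bez_lincomb) (use \<open>\<rho> \<noteq> 1\<close> in simp)
qed

lemma exists_R:
  assumes finJ: "finite J" and neJ: "J \<noteq> {}" and finK: "finite K"
  shows "\<exists>R. degree R < card J \<and> (\<Prod>j\<in>J. Ls j) dvd R * (\<Prod>k\<in>K. gpoly p (ww k)) - 1"
proof -
  define G where "G = (\<Prod>k\<in>K. gpoly p (ww k))"
  define Nz where "Nz = (\<Prod>j\<in>J. Ls j)"
  have bezGL: "bez G (Ls j)" for j
  proof -
    define z where "z = (1 - ww j) / ww j"
    define e where "e = poly G z"
    have wj: "ww j \<noteq> 0" by (rule ww_nz)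
    have "poly (gpoly p (ww k)) z \<noteq> 0" for k
    proof -
      have "ww k * (1 + z) = ww k / ww j" unfolding z_def using wj by (simp add: field_simps)
      moreover have "small (ww k / ww j)" by (intro small_divide ww_small)
      ultimately have "(\<Sum>i<p. (ww k * (1 + z)) ^ i) \<noteq> 0" using phi_abs p_pos by fastforce
      then show ?thesis unfolding poly_gpoly using p_pos by simp
    qed
    then have e0: "e \<noteq> 0" unfolding e_def G_def poly_prod using finK by simp
    have "[:- z, 1:] dvd G - [:e:]" unfolding poly_eq_0_iff_dvd[symmetric] e_def by simp
    moreover have "Ls j dvd [:- z, 1:]"
    proof -
      have eq: "[:- z, 1:] = smult (1 / ww j) (Ls j)" unfolding z_def using wj by (simp add: field_simps)
      show ?thesis by (subst eq) (rule dvd_smult[OF dvd_refl])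
    qed
    ultimately have "Ls j dvd G - [:e:]" by (rule dvd_trans[rotated])
    then obtain Q where "G - [:e:] = Ls j * Q" by blast
    then have "G - Q * Ls j = [:e:]" by (simp add: algebra_simps)
    then show ?thesis using e0 by (rule bez_lincomb)
  qed
  have "bez G Nz" unfolding Nz_def using finJ by (intro bez_prod bezGL)
  then obtain s t where st: "s * G + t * Nz = 1" unfolding bez_def by blast
  have dv: "Nz dvd s * G - 1"
  proof -
    have "s * G - 1 = Nz * (- t)" using st by (simp add: algebra_simps)
    then show ?thesis by simp
  qed
  have s1: "card J \<ge> 1" using finJ neJ by (simp add: card_gt_0_iff Suc_le_eq)
  note NP = Nz_props[where w=ww, OF finJ ww_small]
  have "\<exists>r. (\<forall>i\<ge>card J. coeff r i = 0) \<and> Nz dvd (s - r) \<and> cb (norm1 absv s) r"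
    unfolding Nz_def by (rule reduce[OF NP(1) s1 NP(2) NP(3) cb_norm1[of s]])
  then obtain r where r: "\<forall>i\<ge>card J. coeff r i = 0" "Nz dvd s - r" by blast
  have eq: "r * G - 1 = (s * G - 1) - (s - r) * G" by (simp add: algebra_simps)
  have "Nz dvd r * G - 1" unfolding eq by (intro dvd_diff dv dvd_mult2 r(2))
  moreover have "degree r < card J" using low_degree[OF s1 r(1)] .
  ultimately have "degree r < card J \<and> Nz dvd r * G - 1" by blast
  then show ?thesis unfolding Nz_def G_def by blast
qed

end



context qpx begin

lemma xi_cond_unique:
  assumes u1: "u \<noteq> 1" and finJ: "finite J" and sub: "J' \<subseteq> J"
    and f1: "xi_cond p u n J' J f1" and f2: "xi_cond p u n J' J f2"
  shows "f1 = f2"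
proof -
  define Mo where "Mo j = (if j \<in> J' then twist u j (omega p n) else twist u j (omega p (n - 1)))" for j
  have Mo_dvd: "Mo j dvd twist u j (omega p n)" for j
    unfolding Mo_def tw_omega_split by auto
  have Mo_bez: "bez (Mo j) (Mo k)" if "j \<noteq> k" for j k
    using tw_bez[OF u1 that] Mo_dvd[of j] Mo_dvd[of k] by (rule bez_dvd)
  have Mo_D: "Mo j dvd f1 - f2" if "j \<in> J" for j
  proof (cases "j \<in> J'")
    case True
    define g where "g = smult (1 / of_nat p) (twist u j (xi p n))"
    have "Mo j dvd f1 - g" "Mo j dvd f2 - g"
      using f1 f2 True unfolding xi_cond_def Mo_def g_def by auto
    then have "Mo j dvd (f1 - g) - (f2 - g)" by (rule dvd_diff)
    then show ?thesis by simp
  next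
    case False
    have "Mo j dvd f1 - 1" "Mo j dvd f2 - 1"
      using f1 f2 False that unfolding xi_cond_def Mo_def by auto
    then have "Mo j dvd (f1 - 1) - (f2 - 1)" by (rule dvd_diff)
    then show ?thesis by simp
  qed
  have dvP: "prod Mo J dvd f1 - f2"
    using finJ Mo_bez Mo_D by (intro prod_dvd_bez) auto
  have Mo_nz: "Mo j \<noteq> 0" for j unfolding Mo_def using tw_omega_nz by auto
  have degMo: "degree (Mo j) = (if j \<in> J' then NN * p else NN)" for j
    by (simp add: Mo_def tw_omega_deg pn_eq NN_def)
  have finJ': "finite J'" using finJ sub by (metis finite_subset)
  have "degree (prod Mo J) = (\<Sum>j\<in>J. if j \<in> J' then NN * p else NN)"
    using Mo_nz degMo by (simp add: degree_prod_sum_eq)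
  also have "\<dots> = (\<Sum>j\<in>J'. NN * p) + (\<Sum>j\<in>J - J'. NN)"
    using sum.subset_diff[OF sub finJ, of "\<lambda>j. if j \<in> J' then NN * p else NN"]
    by (simp add: add.commute)
  also have "\<dots> = card J' * (NN * p) + (card J - card J') * NN"
    using sub finJ' by (simp add: card_Diff_subset)
  also have "\<dots> = ((p - 1) * card J' + card J) * NN"
  proof -
    have "card J' \<le> card J" using sub finJ by (rule card_mono[rotated])
    moreover have "p \<ge> 1" using p_pos by simp
    ultimately show ?thesis by (simp add: algebra_simps diff_mult_distrib diff_mult_distrib2)
  qed
  finally have degP: "degree (prod Mo J) = ((p - 1) * card J' + card J) * NN" .
  have "degree f1 < ((p - 1) * card J' + card J) * NN" "degree f2 < ((p - 1) * card J' + card J) * NN"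
    using f1 f2 unfolding xi_cond_def NN_def by auto
  then have "degree (f1 - f2) < ((p - 1) * card J' + card J) * NN"
    using degree_diff_le_max[of f1 f2] by linarith
  show ?thesis
  proof (rule ccontr)
    assume "f1 \<noteq> f2"
    then have "degree (prod Mo J) \<le> degree (f1 - f2)" using dvP by (intro dvd_imp_degree_le) auto
    then show False using degP \<open>degree (f1 - f2) < _\<close> by simp
  qed
qed

lemma phi_deg: "degree (pcompose F qq) = degree F * NN"
  by (simp add: degree_pcompose deg_qq)

lemma X0_cond:
  assumes finJ: "finite J" and neJ: "J \<noteq> {}" and sub: "J' \<subseteq> J"
    and degR: "degree R < card J"
    and dvR: "(\<Prod>j\<in>J. Ls j) dvd R * (\<Prod>k\<in>J'. gpoly p (ww k)) - 1"
  shows "xi_cond p u n J' J (pcompose R qq * ellS p u n J')"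
proof -
  define G where "G = (\<Prod>k\<in>J'. gpoly p (ww k))"
  have finJ': "finite J'" using finJ sub by (metis finite_subset)
  have X0: "pcompose R qq * ellS p u n J' = pcompose (R * G) qq"
    unfolding ellS_eq G_def by (simp add: pcompose_mult)
  have degG: "degree G \<le> card J' * (p - 1)"
  proof -
    have "degree G \<le> (\<Sum>k\<in>J'. degree (gpoly p (ww k)))"
      unfolding G_def using degree_prod_sum_le[OF finJ'] by (simp add: o_def)
    also have "\<dots> \<le> (\<Sum>k\<in>J'. p - 1)" by (intro sum_mono gpoly_degree)
    finally show ?thesis by simp
  qed
  have s1: "card J \<ge> 1" using finJ neJ by (simp add: card_gt_0_iff Suc_le_eq)
  have "degree (R * G) \<le> degree R + degree G" by (rule degree_mult_le)
  also have "\<dots> \<le> (card J - 1) + card J' * (p - 1)" using degR degG by linarith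
  finally have "degree (R * G) * NN \<le> ((card J - 1) + card J' * (p - 1)) * NN" by simp
  also have "\<dots> < ((p - 1) * card J' + card J) * NN" using s1 NN_pos
    by (intro mult_strict_right_mono) (auto simp: mult.commute)
  finally have deg: "degree (pcompose R qq * ellS p u n J') < ((p - 1) * card J' + card J) * p ^ (n - 1)"
    unfolding X0 phi_deg NN_def .
  have LdvR: "Ls j dvd R * G - 1" if "j \<in> J" for j
  proof -
    have "Ls j dvd (\<Prod>j\<in>J. Ls j)" using that finJ by (intro dvd_prodI)
    then show ?thesis using dvR unfolding G_def by (rule dvd_trans)
  qed
  have part1: "twist u j (omega p n) dvd pcompose R qq * ellS p u n J' - smult (1 / of_nat p) (twist u j (xi p n))"
    if j: "j \<in> J'" for j
  proof -
    define y where "y = [:ww j, ww j:]"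
    define g where "g = gpoly p (ww j)"
    define G' where "G' = (\<Prod>k\<in>J' - {j}. gpoly p (ww k))"
    have GG: "G = g * G'" unfolding G_def g_def G'_def using prod.remove[OF finJ' j] .
    have y1: "y - 1 = Ls j" unfolding y_def by (simp add: one_pCons)
    have sumg: "(\<Sum>i<p. y ^ i) = smult (of_nat p) g"
      unfolding g_def gpoly_def y_def using p_pos by simp
    have yp: "y ^ p - 1 = Ls j * smult (of_nat p) g"
      unfolding y1[symmetric] sumg[symmetric] by (rule power_diff_1_eq)
    have "Ls j dvd (\<Sum>i<p. y ^ i - 1)"
      by (intro dvd_sum) (auto simp: power_diff_1_eq y1[symmetric])
    moreover have "(\<Sum>i<p. y ^ i - 1) = smult (of_nat p) (g - 1)"
      using sumg by (simp add: sum_subtractf smult_diff_right of_nat_poly)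
    ultimately have "Ls j dvd smult (of_nat p) (g - 1)" by simp
    then have Lg: "Ls j dvd g - 1" using p_pos by (simp add: dvd_smult_iff)
    have eq1: "R * G' - 1 = (R * G - 1) - R * G' * (g - 1)" unfolding GG by (simp add: algebra_simps)
    have "Ls j dvd R * G - 1" using LdvR[of j] j sub by auto
    moreover have "Ls j dvd R * G' * (g - 1)" using Lg by (rule dvd_mult)
    ultimately have LG': "Ls j dvd R * G' - 1" unfolding eq1 by (rule dvd_diff)
    have "smult (of_nat p) g dvd g"
    proof -
      have "g = smult (1 / of_nat p) (smult (of_nat p) g)" using p_pos by simp
      then show ?thesis by (metis dvd_smult dvd_refl)
    qed
    then have "Ls j * smult (of_nat p) g dvd (R * G' - 1) * g" using LG' by (rule mult_dvd_mono[rotated])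
    moreover have "(R * G' - 1) * g = R * G - g" unfolding GG by (simp add: algebra_simps)
    ultimately have "y ^ p - 1 dvd R * G - g" unfolding yp by simp
    then have "pcompose (y ^ p - 1) qq dvd pcompose (R * G - g) qq" by (rule pcompose_dvd)
    then show ?thesis unfolding X0 tw_om tw_xi_g y_def g_def by (simp add: pcompose_diff)
  qed
  have part2: "twist u j (omega p (n - 1)) dvd pcompose R qq * ellS p u n J' - 1" if j: "j \<in> J - J'" for j
  proof -
    have "pcompose (Ls j) qq dvd pcompose (R * G - 1) qq" using LdvR j by (intro pcompose_dvd) auto
    then show ?thesis unfolding X0 tw_om1 by (simp add: pcompose_diff pcompose_1)
  qed
  show ?thesis unfolding xi_cond_def using deg part1 part2 by blast
qed

end



context qpx begin

lemma ef_floor: "s \<ge> 1 \<Longrightarrow> ef (s - 1) = \<lfloor>(real s - 1) / (real p - 1)\<rfloor>"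
proof -
  assume "s \<ge> 1"
  then have "real s - 1 = real (s - 1)" "real p - 1 = real (p - 1)" using p_pos by (simp_all add: of_nat_diff)
  then show ?thesis unfolding ef_def by (simp only: floor_divide_of_nat_eq)
qed

lemma main_result:
  assumes u1: "u \<noteq> 1" and finJ: "finite J" and aJ: "a \<in> J" and sub: "J' \<subseteq> J"
  defines "X \<equiv> xitilde p u n J' J"
  shows "(\<exists>!f. xi_cond p u n J' J f)
    \<and> X = polyinv (ellS p u n J') (omegaS p u (n - 1) J) * ellS p u n J'
    \<and> (omegaS p u n J' div omegaS p u (n - 1) J') dvd X
    \<and> omegaS p u (n - 1) J dvd (X - 1)
    \<and> real p ^ card J' \<le> norm1 absv X
    \<and> norm1 absv X \<le> real p powi (int (card J') +
         \<lfloor>(real (card J) - 1) / (real p - 1)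
           + max 0 (1 / (real p - 1) + real (multiplicity p (fact (card J - 1)))
                    - ordv p absv (u ^ (p ^ (n - 1)) - 1))\<rfloor>)
    \<and> (real n > real (multiplicity p (fact (card J - 1))) - (ordv p absv (u - 1) - 1) \<longrightarrow>
         real p ^ card J' \<le> norm1 absv X
         \<and> norm1 absv X \<le> real p powi (int (card J') + beta_tilde p (card J))
         \<and> (beta_tilde p (card J) = 0 \<longrightarrow>
              (\<exists>h h'. integral_fps absv h \<and> integral_fps absv h' \<and> h * h' = 1
                  \<and> fps_of_poly X = h * fps_of_poly (ellS p u n J'))))"
proof -
  define s where "s = card J"
  have neJ: "J \<noteq> {}" using aJ by auto
  have s1: "s \<ge> 1" using finJ neJ by (simp add: s_def card_gt_0_iff Suc_le_eq)
  have finJ': "finite J'" using finJ sub by (metis finite_subset)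
  define G where "G = (\<Prod>k\<in>J'. gpoly p (ww k))"
  define Nz where "Nz = (\<Prod>j\<in>J. Ls j)"
  obtain R where degR: "degree R < card J" and dvR: "Nz dvd R * G - 1"
    using exists_R[OF finJ neJ finJ'] unfolding Nz_def G_def by blast
  define F where "F = pcompose R qq"
  define LL where "LL = ellS p u n J'"
  define OM where "OM = omegaS p u (n - 1) J"
  have LL_eq: "LL = pcompose G qq" unfolding LL_def G_def by (rule ellS_eq)
  have OM_eq: "OM = pcompose Nz qq" unfolding OM_def Nz_def by (rule omegaS1_eq)
  note NP = Nz_props[where w=ww, OF finJ ww_small]
  have degNz: "degree Nz = s" unfolding Nz_def s_def using NP(1) .
  have cond: "xi_cond p u n J' J (F * LL)"
    unfolding F_def LL_def using X0_cond[OF finJ neJ sub degR] dvR unfolding Nz_def G_def by blast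
  have uniq: "\<exists>!f. xi_cond p u n J' J f"
    using cond xi_cond_unique[OF u1 finJ sub] by blast
  have X_eq: "X = F * LL" unfolding X_def xitilde_def using uniq cond by (rule the1_equality)
  have FL1: "F * LL - 1 = pcompose (R * G - 1) qq"
    unfolding F_def LL_eq by (simp add: pcompose_mult pcompose_diff pcompose_1)
  have OMdv: "OM dvd F * LL - 1" unfolding FL1 OM_eq using dvR by (rule pcompose_dvd)
  have degF: "degree F < degree OM"
    unfolding F_def OM_eq phi_deg degNz using degR NN_pos unfolding s_def by simp
  have pinv: "polyinv LL OM = F"
    unfolding polyinv_def
  proof (rule the_equality)
    show "degree F < degree OM \<and> OM dvd F * LL - 1" using degF OMdv by blast
  next
    fix R' assume R': "degree R' < degree OM \<and> OM dvd R' * LL - 1"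
    have eq: "R' - F = (R' * LL - 1) * F - (F * LL - 1) * R'" by (simp add: algebra_simps)
    have "OM dvd (R' * LL - 1) * F" using R' by (intro dvd_mult2) auto
    moreover have "OM dvd (F * LL - 1) * R'" using OMdv by (rule dvd_mult2)
    ultimately have dv: "OM dvd R' - F" unfolding eq by (rule dvd_diff)
    have dg: "degree (R' - F) < degree OM" using R' degF degree_diff_le_max[of R' F] by linarith
    show "R' = F"
    proof (rule ccontr)
      assume "R' \<noteq> F"
      then have "degree OM \<le> degree (R' - F)" using dv by (metis dvd_imp_degree_le right_minus_eq)
      then show False using dg by simp
    qed
  qed
  have divpart: "(omegaS p u n J' div omegaS p u (n - 1) J') dvd X"
  proof -
    have sp: "omegaS p u n J' = omegaS p u (n - 1) J' * (\<Prod>j\<in>J'. twist u j (xi p n))"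
      unfolding omegaS_def tw_omega_split by (rule prod.distrib)
    have nz: "omegaS p u (n - 1) J' \<noteq> 0" unfolding omegaS_def using tw_omega_nz finJ' by simp
    have "omegaS p u n J' div omegaS p u (n - 1) J' = (\<Prod>j\<in>J'. twist u j (xi p n))"
      unfolding sp using nz by simp
    moreover have "LL = smult ((1 / of_nat p) ^ card J') (\<Prod>j\<in>J'. twist u j (xi p n))"
      unfolding LL_def ellS_def prod_smult by simp
    ultimately show ?thesis unfolding X_eq by (simp add: dvd_smult)
  qed
  have cbR: "cb (real p powi ef (s - 1)) R"
    unfolding s_def using main_bound[where w=ww, OF finJ neJ finJ' ww_small degR] dvR unfolding Nz_def G_def by blast
  have nl: "norm1 absv LL = real p ^ card J'"
    unfolding LL_def ellS_def norm1_prod norm1_smult av_p_inv tw_xi_norm by simp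
  have nF_le: "norm1 absv F \<le> real p powi ef (s - 1)"
    unfolding F_def by (rule norm1_le, rule cb_pcompose[OF cb_qq cbR])
  define x0 where "x0 = u powi a - 1"
  have x0s: "absv x0 \<le> 1 / real p" using small_powi[OF su, of a] unfolding x0_def small_def .
  have x0l: "absv x0 < 1" using x0s p_gt2 by (simp add: le_less_trans)
  have qx0: "poly qq x0 = 0"
  proof -
    have "cc a * u powi a = 1" unfolding cc_def using u_nz by (simp add: power_int_minus)
    then show ?thesis unfolding qq_eq x0_def by (simp add: algebra_simps)
  qed
  have Fx0: "poly F x0 = poly R 0" unfolding F_def poly_pcompose qx0 ..
  have Nz0: "poly Nz 0 = 0" unfolding Nz_def poly_prod using finJ aJ ww_a by auto
  obtain K where "R * G - 1 = Nz * K" using dvR by blast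
  then have "poly (R * G - 1) 0 = 0" using Nz0 by simp
  then have RG0: "poly R 0 * poly G 0 = 1" by simp
  have G0: "absv (poly G 0) = 1"
  proof -
    have "absv (poly (gpoly p (ww k)) 0) = 1" for k
      using gpoly_coeff0_abs[OF ww_small[of k]] by (simp add: poly_0_coeff_0)
    then show ?thesis unfolding G_def poly_prod av_prod by simp
  qed
  have R0: "absv (poly R 0) = 1" using arg_cong[OF RG0, of absv] G0 by (simp add: av_mult)
  have nF_ge: "1 \<le> norm1 absv F"
    using poly_le_norm1[of x0 F] x0l R0 unfolding Fx0 by simp
  have nX: "norm1 absv X = norm1 absv F * real p ^ card J'" unfolding X_eq norm1_mult nl ..
  have low: "real p ^ card J' \<le> norm1 absv X"
    unfolding nX using mult_right_mono[OF nF_ge, of "real p ^ card J'"] by simp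
  have upp0: "norm1 absv X \<le> real p powi (int (card J') + ef (s - 1))"
  proof -
    have "norm1 absv X \<le> real p powi ef (s - 1) * real p ^ card J'"
      unfolding nX using nF_le by (intro mult_right_mono) auto
    also have "\<dots> = real p powi (int (card J') + ef (s - 1))"
      by (simp add: rp_powi_add power_int_of_nat mult.commute)
    finally show ?thesis .
  qed
  have efs: "ef (s - 1) = beta_tilde p (card J)"
    unfolding beta_tilde_def s_def using ef_floor s1 unfolding s_def by simp
  have upp: "norm1 absv X \<le> real p powi (int (card J') +
         \<lfloor>(real (card J) - 1) / (real p - 1)
           + max 0 (1 / (real p - 1) + real (multiplicity p (fact (card J - 1)))
                    - ordv p absv (u ^ (p ^ (n - 1)) - 1))\<rfloor>)"
  proof -
    have "ef (s - 1) \<le> \<lfloor>(real (card J) - 1) / (real p - 1)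
           + max 0 (1 / (real p - 1) + real (multiplicity p (fact (card J - 1)))
                    - ordv p absv (u ^ (p ^ (n - 1)) - 1))\<rfloor>"
    proof -
      have "ef (s - 1) = \<lfloor>(real (card J) - 1) / (real p - 1)\<rfloor>" using ef_floor[OF s1] unfolding s_def .
      also have "\<dots> \<le> \<lfloor>(real (card J) - 1) / (real p - 1)
           + max 0 (1 / (real p - 1) + real (multiplicity p (fact (card J - 1)))
                    - ordv p absv (u ^ (p ^ (n - 1)) - 1))\<rfloor>" by (intro floor_mono) simp
      finally show ?thesis .
    qed
    then show ?thesis using upp0 rp_powi_mono order_trans by (metis add_left_mono)
  qed
  have fpspart: "beta_tilde p (card J) = 0 \<longrightarrow>
              (\<exists>h h'. integral_fps absv h \<and> integral_fps absv h' \<and> h * h' = 1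
                  \<and> fps_of_poly X = h * fps_of_poly (ellS p u n J'))"
  proof
    assume "beta_tilde p (card J) = 0"
    then have "ef (s - 1) = 0" using efs by simp
    then have cbF: "cb 1 F" unfolding F_def using cb_pcompose[OF cb_qq cbR] by simp
    have c0: "absv (coeff F 0) = 1" using cbF x0l R0 unfolding Fx0[symmetric] by (rule unit_coeff0)
    define h where "h = fps_of_poly F"
    define h' where "h' = inverse h"
    have fbh: "fb (\<lambda>_. 0) h" unfolding h_def fb_def using cbF unfolding cb_def by simp
    have h0: "absv (h $ 0) = 1" unfolding h_def using c0 by simp
    have fbh': "fb (\<lambda>_. 0) h'" unfolding h'_def using fbh h0 by (rule fb_inverse) auto
    have "h * h' = 1" unfolding h'_def using h0 by (intro inverse_mult_eq_1') auto
    moreover have "integral_fps absv h" "integral_fps absv h'"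
      using fbh fbh' unfolding integral_fps_def fb_def by simp_all
    moreover have "fps_of_poly X = h * fps_of_poly (ellS p u n J')"
      unfolding X_eq h_def LL_def by (simp add: fps_of_poly_mult)
    ultimately show "\<exists>h h'. integral_fps absv h \<and> integral_fps absv h' \<and> h * h' = 1
                  \<and> fps_of_poly X = h * fps_of_poly (ellS p u n J')" by blast
  qed
  show ?thesis
    using uniq X_eq pinv divpart OMdv low upp upp0 efs fpspart
    unfolding LL_def OM_def by auto
qed

end

theorem mainTheorem2:
  fixes p :: nat and absv :: "'a::field_char_0 \<Rightarrow> real" and u :: 'a
    and a b a' b' :: int and n :: nat
  assumes "prime p" and "odd p"
    and "is_Qp p absv"
    and "absv (u - 1) \<le> 1 / real p" and "u \<noteq> 1"
    and "a \<le> b" and "{a'..b'} \<subseteq> {a..b}"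
    and "n \<ge> 1"
  defines "J \<equiv> {a..b}" and "J' \<equiv> {a'..b'}"
  defines "X \<equiv> xitilde p u n J' J"
  shows "(\<exists>!f. xi_cond p u n J' J f)
    \<and> X = polyinv (ellS p u n J') (omegaS p u (n - 1) J) * ellS p u n J'
    \<and> (omegaS p u n J' div omegaS p u (n - 1) J') dvd X
    \<and> omegaS p u (n - 1) J dvd (X - 1)
    \<and> real p ^ card J' \<le> norm1 absv X
    \<and> norm1 absv X \<le> real p powi (int (card J') +
         \<lfloor>(real (card J) - 1) / (real p - 1)
           + max 0 (1 / (real p - 1) + real (multiplicity p (fact (card J - 1)))
                    - ordv p absv (u ^ (p ^ (n - 1)) - 1))\<rfloor>)
    \<and> (real n > real (multiplicity p (fact (card J - 1))) - (ordv p absv (u - 1) - 1) \<longrightarrow>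
         real p ^ card J' \<le> norm1 absv X
         \<and> norm1 absv X \<le> real p powi (int (card J') + beta_tilde p (card J))
         \<and> (beta_tilde p (card J) = 0 \<longrightarrow>
              (\<exists>h h'. integral_fps absv h \<and> integral_fps absv h' \<and> h * h' = 1
                  \<and> fps_of_poly X = h * fps_of_poly (ellS p u n J'))))"
proof -
  interpret qp p absv by unfold_locales (rule assms)+
  interpret qpx p absv u a n by unfold_locales (use assms(4,8) in \<open>auto simp: small_def\<close>)
  have finJ: "finite J" unfolding J_def by simp
  have aJ: "a \<in> J" unfolding J_def using assms by simp
  have sub: "J' \<subseteq> J" unfolding J_def J'_def using assms by simp
  show ?thesis unfolding X_def by (rule main_result[OF assms(5) finJ aJ sub])
qed

end
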